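(* The operator $B:C^2(\mathbf S^1)\subseteq C(\mathbf S^1)\to C(\mathbf S^1)$, $$(Bx)(\theta)=\sigma x''(\theta)+A(\theta)x(\theta)-(\alpha b_0(\theta))^{-1/\gamma}\Big(\int_{\mathbf S^1}x(\xi)b_0(\xi)d\xi\Big)\eta(\theta)^{\frac{q+\gamma-1}{\gamma}},$$ generates an immediately compact $C_0$-semigroup $(e^{tB})_{t\ge0}$ on $C(\mathbf S^1)$.
   Context: $\mathbf S^1\cong[0,2\pi]$ with endpoints identified, Lebesgue measure $d\theta$; $C(\mathbf S^1)$ has the sup-norm. $\sigma>0$, $A,\eta\in C(\mathbf S^1;(0,\infty))$, $q\ge0$, $\gamma\in(0,1)\cup(1,\infty)$, $\rho>0$ with $\rho>\lambda_0(1-\gamma)$. $\lambda_0$ is the largest (simple) eigenvalue of $Lx=\sigma x''+Ax$ on $C^2(\mathbf S^1)$ and $b_0>0$ its $L^2$-normalized eigenfunction. $\alpha=\Big[\frac{\gamma}{\rho-\lambda_0(1-\gamma)}\int_{\mathbf S^1}\eta^{\frac{q+\gamma-1}{\gamma}}b_0^{\frac{\gamma-1}{\gamma}}d\theta\Big]^\gamma$. *)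

theory Defs
  imports "HOL-Analysis.Analysis"
begin

text \<open>S^1 = [0,2pi] with endpoints identified; functions on S^1 are represented
  as 2pi-periodic functions real => real.\<close>

definition CS1 :: "(real \<Rightarrow> real) set" where
  "CS1 = {x. continuous_on UNIV x \<and> (\<forall>\<theta>. x (\<theta> + 2*pi) = x \<theta>)}"

definition supn :: "(real \<Rightarrow> real) \<Rightarrow> real" where
  "supn x = Sup ((\<lambda>\<theta>. \<bar>x \<theta>\<bar>) ` {0..2*pi})"

definition C2S1 :: "(real \<Rightarrow> real) set" where
  "C2S1 = {x. x \<in> CS1 \<and> (\<forall>\<theta>. x differentiable at \<theta>)
              \<and> (\<forall>\<theta>. deriv x differentiable at \<theta>)
              \<and> continuous_on UNIV (deriv (deriv x))}"

definition eigenpair :: "real \<Rightarrow> (real \<Rightarrow> real) \<Rightarrow> real \<Rightarrow> (real \<Rightarrow> real) \<Rightarrow> bool" where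
  "eigenpair \<sigma> A lam b \<longleftrightarrow> b \<in> C2S1 \<and> (\<exists>\<theta>. b \<theta> \<noteq> 0)
     \<and> (\<forall>\<theta>. \<sigma> * deriv (deriv b) \<theta> + A \<theta> * b \<theta> = lam * b \<theta>)"

definition alpha_const :: "real \<Rightarrow> real \<Rightarrow> real \<Rightarrow> real \<Rightarrow> (real \<Rightarrow> real) \<Rightarrow> (real \<Rightarrow> real) \<Rightarrow> real" where
  "alpha_const \<gamma> \<rho> lam0 q \<eta> b0 =
     (\<gamma> / (\<rho> - lam0 * (1 - \<gamma>)) *
      integral {0..2*pi} (\<lambda>\<theta>. \<eta> \<theta> powr ((q + \<gamma> - 1) / \<gamma>) * b0 \<theta> powr ((\<gamma> - 1) / \<gamma>))) powr \<gamma>"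

definition Bop :: "real \<Rightarrow> (real \<Rightarrow> real) \<Rightarrow> real \<Rightarrow> real \<Rightarrow> real \<Rightarrow> (real \<Rightarrow> real)
                   \<Rightarrow> (real \<Rightarrow> real) \<Rightarrow> (real \<Rightarrow> real) \<Rightarrow> (real \<Rightarrow> real)" where
  "Bop \<sigma> A \<alpha> q \<gamma> \<eta> b0 x = (\<lambda>\<theta>. \<sigma> * deriv (deriv x) \<theta> + A \<theta> * x \<theta>
      - (\<alpha> * b0 \<theta>) powr (-1 / \<gamma>) * integral {0..2*pi} (\<lambda>\<xi>. x \<xi> * b0 \<xi>)
        * \<eta> \<theta> powr ((q + \<gamma> - 1) / \<gamma>))"

definition bounded_linear_CS1 :: "((real \<Rightarrow> real) \<Rightarrow> (real \<Rightarrow> real)) \<Rightarrow> bool" where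
  "bounded_linear_CS1 S \<longleftrightarrow> (\<forall>x\<in>CS1. S x \<in> CS1)
     \<and> (\<forall>x\<in>CS1. \<forall>y\<in>CS1. \<forall>a b. S (\<lambda>\<theta>. a * x \<theta> + b * y \<theta>) = (\<lambda>\<theta>. a * S x \<theta> + b * S y \<theta>))
     \<and> (\<exists>M. \<forall>x\<in>CS1. supn (S x) \<le> M * supn x)"

definition C0_semigroup_CS1 :: "(real \<Rightarrow> (real \<Rightarrow> real) \<Rightarrow> (real \<Rightarrow> real)) \<Rightarrow> bool" where
  "C0_semigroup_CS1 T \<longleftrightarrow> (\<forall>t\<ge>0. bounded_linear_CS1 (T t))
     \<and> (\<forall>x\<in>CS1. T 0 x = x)
     \<and> (\<forall>t\<ge>0. \<forall>s\<ge>0. \<forall>x\<in>CS1. T (t + s) x = T t (T s x))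
     \<and> (\<forall>x\<in>CS1. ((\<lambda>t. supn (\<lambda>\<theta>. T t x \<theta> - x \<theta>)) \<longlongrightarrow> 0) (at_right 0))"

definition generator_CS1 :: "(real \<Rightarrow> (real \<Rightarrow> real) \<Rightarrow> (real \<Rightarrow> real)) \<Rightarrow> (real \<Rightarrow> real) set
      \<Rightarrow> ((real \<Rightarrow> real) \<Rightarrow> (real \<Rightarrow> real)) \<Rightarrow> bool" where
  "generator_CS1 T D G \<longleftrightarrow>
     (\<forall>x\<in>CS1. x \<in> D \<longleftrightarrow> (\<exists>y\<in>CS1.
         ((\<lambda>t. supn (\<lambda>\<theta>. (T t x \<theta> - x \<theta>) / t - y \<theta>)) \<longlongrightarrow> 0) (at_right 0)))
     \<and> D \<subseteq> CS1
     \<and> (\<forall>x\<in>D. G x \<in> CS1 \<and>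
         ((\<lambda>t. supn (\<lambda>\<theta>. (T t x \<theta> - x \<theta>) / t - G x \<theta>)) \<longlongrightarrow> 0) (at_right 0))"

definition compact_op_CS1 :: "((real \<Rightarrow> real) \<Rightarrow> (real \<Rightarrow> real)) \<Rightarrow> bool" where
  "compact_op_CS1 S \<longleftrightarrow> (\<forall>u :: nat \<Rightarrow> real \<Rightarrow> real. (\<forall>n. u n \<in> CS1 \<and> supn (u n) \<le> 1) \<longrightarrow>
      (\<exists>r y. strict_mono r \<and> y \<in> CS1 \<and>
         (\<lambda>n. supn (\<lambda>\<theta>. S (u (r n)) \<theta> - y \<theta>)) \<longlonglongrightarrow> 0))"

end

theory Submission
  imports Defs "HOL-Probability.Probability" "HOL-Complex_Analysis.Great_Picard"
begin


lemma CS1_cont: "x \<in> CS1 \<Longrightarrow> continuous_on UNIV x"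
  by (simp add: CS1_def)

lemma CS1_per: "x \<in> CS1 \<Longrightarrow> x (\<theta> + 2*pi) = x \<theta>"
  by (simp add: CS1_def)

lemma CS1_per_int: assumes "x \<in> CS1" shows "x (\<theta> + 2*pi * of_int k) = x \<theta>"
proof (induction k rule: int_induct[where k=0])
  case base then show ?case by simp
next
  case (step1 i)
  have "x (\<theta> + 2*pi * of_int (i+1)) = x ((\<theta> + 2*pi * of_int i) + 2*pi)"
    by (simp add: algebra_simps)
  also have "\<dots> = x \<theta>" using CS1_per[OF assms] step1 by simp
  finally show ?case .
next
  case (step2 i)
  have "x (\<theta> + 2*pi * of_int i) = x ((\<theta> + 2*pi * of_int (i - 1)) + 2*pi)"
    by (simp add: algebra_simps)
  also have "\<dots> = x (\<theta> + 2*pi * of_int (i - 1))" using CS1_per[OF assms] by simp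
  finally show ?case using step2 by simp
qed

definition red :: "real \<Rightarrow> real" where
  "red \<theta> = \<theta> - 2*pi * of_int \<lfloor>\<theta>/(2*pi)\<rfloor>"

lemma red_range: "red \<theta> \<in> {0..<2*pi}"
proof -
  have p: "2*pi > 0" by simp
  have "of_int \<lfloor>\<theta>/(2*pi)\<rfloor> \<le> \<theta>/(2*pi)" by simp
  then have a: "2*pi * of_int \<lfloor>\<theta>/(2*pi)\<rfloor> \<le> \<theta>"
    using pos_le_divide_eq[OF p] by (metis mult.commute)
  have "\<theta>/(2*pi) < of_int \<lfloor>\<theta>/(2*pi)\<rfloor> + 1" by linarith
  then have b: "\<theta> < 2*pi * of_int \<lfloor>\<theta>/(2*pi)\<rfloor> + 2*pi"
    using pos_divide_less_eq[OF p] by (simp add: algebra_simps)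
  show ?thesis using a b by (simp add: red_def)
qed

lemma CS1_red: "x \<in> CS1 \<Longrightarrow> x (red \<theta>) = x \<theta>"
  using CS1_per_int[of x "red \<theta>" "\<lfloor>\<theta>/(2*pi)\<rfloor>"] by (simp add: red_def)

lemma CS1_range: "x \<in> CS1 \<Longrightarrow> range x = x ` {0..2*pi}"
proof
  assume x: "x \<in> CS1"
  show "range x \<subseteq> x ` {0..2*pi}"
  proof
    fix y assume "y \<in> range x"
    then obtain \<theta> where "y = x \<theta>" by auto
    then have "y = x (red \<theta>)" using CS1_red[OF x] by simp
    then show "y \<in> x ` {0..2*pi}" using red_range[of \<theta>] by auto
  qed
qed auto

lemma CS1_bounded: assumes "x \<in> CS1" shows "bounded (range x)"
proof -
  have "compact (x ` {0..2*pi})"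
    by (rule compact_continuous_image) (use CS1_cont[OF assms] continuous_on_subset in auto)
  then show ?thesis using CS1_range[OF assms] compact_imp_bounded by auto
qed

lemma CS1_bcontfun: "x \<in> CS1 \<Longrightarrow> x \<in> bcontfun"
  using CS1_bounded CS1_cont by (auto simp: bcontfun_def)

lemma supn_eq_SUP: assumes "x \<in> CS1" shows "supn x = (SUP \<theta>. \<bar>x \<theta>\<bar>)"
proof -
  have "(\<lambda>\<theta>. \<bar>x \<theta>\<bar>) ` UNIV = (\<lambda>\<theta>. \<bar>x \<theta>\<bar>) ` {0..2*pi}"
    using CS1_range[OF assms] by (metis image_comp image_image)
  then show ?thesis unfolding supn_def by (metis)
qed

lemma CS1_bdd: assumes "x \<in> CS1" shows "bdd_above (range (\<lambda>\<theta>. \<bar>x \<theta>\<bar>))"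
proof -
  obtain B where "\<forall>y\<in>range x. norm y \<le> B" using CS1_bounded[OF assms] bounded_iff by blast
  then show ?thesis by (auto intro!: bdd_aboveI[of _ B])
qed

lemma supn_ge: "x \<in> CS1 \<Longrightarrow> \<bar>x \<theta>\<bar> \<le> supn x"
  unfolding supn_eq_SUP by (rule cSUP_upper) (auto simp: CS1_bdd)

lemma supn_le: "x \<in> CS1 \<Longrightarrow> (\<And>\<theta>. \<bar>x \<theta>\<bar> \<le> B) \<Longrightarrow> supn x \<le> B"
  by (simp add: supn_eq_SUP cSUP_least)

lemma supn_nonneg: "x \<in> CS1 \<Longrightarrow> 0 \<le> supn x"
  using supn_ge[of x 0] by linarith

lemma CS1_unif_cont: assumes x: "x \<in> CS1" and e: "e > 0"
  shows "\<exists>d>0. \<forall>a b. \<bar>a - b\<bar> < d \<longrightarrow> \<bar>x a - x b\<bar> < e"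
proof -
  have "uniformly_continuous_on {-2*pi..4*pi} x"
    by (rule compact_uniformly_continuous) (use CS1_cont[OF x] continuous_on_subset in auto)
  then obtain d where d: "d > 0" and dd: "\<And>a b. a \<in> {-2*pi..4*pi} \<Longrightarrow> b \<in> {-2*pi..4*pi} \<Longrightarrow> dist b a < d \<Longrightarrow> dist (x b) (x a) < e"
    unfolding uniformly_continuous_on_def using e by metis
  show ?thesis
  proof (intro exI[of _ "min d 1"] conjI allI impI)
    show "min d 1 > 0" using d by simp
    fix a b assume ab: "\<bar>a - b\<bar> < min d 1"
    define k where "k = \<lfloor>a/(2*pi)\<rfloor>"
    define a' where "a' = a - 2*pi * of_int k"
    define b' where "b' = b - 2*pi * of_int k"
    have a'r: "a' \<in> {0..<2*pi}" using red_range[of a] by (simp add: a'_def red_def k_def)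
    have "b' - a' = b - a" by (simp add: a'_def b'_def)
    then have "\<bar>b' - a'\<bar> < 1" "\<bar>b' - a'\<bar> < d" using ab by auto
    moreover have "pi > 3" using pi_gt3 .
    ultimately have b'r: "b' \<in> {-2*pi..4*pi}" using a'r by auto
    have "dist (x b') (x a') < e"
      by (rule dd) (use a'r b'r \<open>\<bar>b' - a'\<bar> < d\<close> pi_gt3 in \<open>auto simp: dist_real_def\<close>)
    moreover have "x a' = x a" "x b' = x b"
      using CS1_per_int[OF x, of a' k] CS1_per_int[OF x, of b' k] by (auto simp: a'_def b'_def)
    ultimately show "\<bar>x a - x b\<bar> < e" by (simp add: dist_real_def abs_minus_commute)
  qed
qed

typedef cper = "{f :: real \<Rightarrow>\<^sub>C real. \<forall>\<theta>. apply_bcontfun f (\<theta> + 2*pi) = apply_bcontfun f \<theta>}"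
  morphisms Rep_cper Abs_cper
  by (rule exI[of _ 0]) simp

setup_lifting type_definition_cper

instantiation cper :: real_vector
begin
lift_definition zero_cper :: cper is 0 by simp
lift_definition plus_cper :: "cper \<Rightarrow> cper \<Rightarrow> cper" is "(+)" by simp
lift_definition minus_cper :: "cper \<Rightarrow> cper \<Rightarrow> cper" is "(-)" by simp
lift_definition uminus_cper :: "cper \<Rightarrow> cper" is "uminus" by simp
lift_definition scaleR_cper :: "real \<Rightarrow> cper \<Rightarrow> cper" is "scaleR" by simp
instance
  by standard (transfer; simp add: algebra_simps scaleR_add_right scaleR_add_left)+
end

instantiation cper :: real_normed_vector
begin
lift_definition norm_cper :: "cper \<Rightarrow> real" is norm .
lift_definition dist_cper :: "cper \<Rightarrow> cper \<Rightarrow> real" is dist .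
definition sgn_cper :: "cper \<Rightarrow> cper" where "sgn_cper f = f /\<^sub>R norm f"
definition uniformity_cper :: "(cper \<times> cper) filter"
  where "uniformity_cper = (INF e\<in>{0 <..}. principal {(x, y). dist x y < e})"
definition open_cper :: "cper set \<Rightarrow> bool"
  where "open_cper S = (\<forall>x\<in>S. \<forall>\<^sub>F (x', y) in uniformity. x' = x \<longrightarrow> y \<in> S)"
instance
proof
  fix x y :: cper and a :: real
  show "dist x y = norm (x - y)" by transfer (simp add: dist_norm)
  show "norm (x + y) \<le> norm x + norm y" by transfer (simp add: norm_triangle_ineq)
  show "norm (a *\<^sub>R x) = \<bar>a\<bar> * norm x" by transfer simp
  show "(norm x = 0) = (x = 0)" by transfer simp
qed (simp_all add: sgn_cper_def uniformity_cper_def open_cper_def)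
end

instance cper :: banach
proof
  fix f :: "nat \<Rightarrow> cper"
  assume c: "Cauchy f"
  have "Cauchy (\<lambda>n. Rep_cper (f n))"
    using c unfolding Cauchy_def by (simp add: dist_cper.rep_eq)
  then obtain l where l: "(\<lambda>n. Rep_cper (f n)) \<longlonglongrightarrow> l"
    using convergent_def complete_UNIV convergent_eq_Cauchy by blast
  have per: "\<forall>\<theta>. apply_bcontfun l (\<theta> + 2*pi) = apply_bcontfun l \<theta>"
  proof
    fix \<theta>
    have u: "uniform_limit UNIV (\<lambda>n. Rep_cper (f n)) l sequentially"
      by (rule tendsto_bcontfun_uniform_limit[OF l])
    have "(\<lambda>n. apply_bcontfun (Rep_cper (f n)) (\<theta> + 2*pi)) \<longlonglongrightarrow> l (\<theta> + 2*pi)"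
      by (rule tendsto_uniform_limitI[OF u]) simp
    moreover have "(\<lambda>n. apply_bcontfun (Rep_cper (f n)) (\<theta> + 2*pi)) \<longlonglongrightarrow> l \<theta>"
      using Rep_cper[of "f _"] tendsto_uniform_limitI[OF u, of \<theta>] by simp
    ultimately show "apply_bcontfun l (\<theta> + 2*pi) = apply_bcontfun l \<theta>"
      using LIMSEQ_unique by blast
  qed
  have "f \<longlonglongrightarrow> Abs_cper l"
    unfolding tendsto_iff dist_cper.rep_eq using l per Abs_cper_inverse[of l]
    by (simp add: tendsto_iff)
  then show "convergent f" by (rule convergentI)
qed

definition cf :: "cper \<Rightarrow> real \<Rightarrow> real" where
  "cf x = apply_bcontfun (Rep_cper x)"

definition mk :: "(real \<Rightarrow> real) \<Rightarrow> cper" where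
  "mk f = Abs_cper (Bcontfun f)"

lemma cf_mk: assumes "f \<in> CS1" shows "cf (mk f) = f"
proof -
  have b: "f \<in> bcontfun" by (rule CS1_bcontfun[OF assms])
  have "apply_bcontfun (Bcontfun f) = f" using Bcontfun_inverse[OF b] .
  then show ?thesis unfolding cf_def mk_def using Abs_cper_inverse[of "Bcontfun f"] CS1_per[OF assms]
    by simp
qed

lemma cf_CS1: "cf x \<in> CS1"
  using Rep_cper[of x] by (auto simp: CS1_def cf_def)

lemma mk_cf: "mk (cf x) = x"
  by (simp add: mk_def cf_def apply_bcontfun_inverse Rep_cper_inverse)

lemma cf_inject: "cf x = cf y \<Longrightarrow> x = y"
  by (metis mk_cf)

lemma cf_eqI: "(\<And>\<theta>. cf x \<theta> = cf y \<theta>) \<Longrightarrow> x = y"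
  by (rule cf_inject) auto

lemma cf_add[simp]: "cf (x + y) \<theta> = cf x \<theta> + cf y \<theta>"
  by (simp add: cf_def plus_cper.rep_eq)
lemma cf_diff[simp]: "cf (x - y) \<theta> = cf x \<theta> - cf y \<theta>"
  by (simp add: cf_def minus_cper.rep_eq)
lemma cf_uminus[simp]: "cf (- x) \<theta> = - cf x \<theta>"
  by (simp add: cf_def uminus_cper.rep_eq)
lemma cf_scaleR[simp]: "cf (a *\<^sub>R x) \<theta> = a * cf x \<theta>"
  by (simp add: cf_def scaleR_cper.rep_eq)
lemma cf_zero[simp]: "cf 0 \<theta> = 0"
  by (simp add: cf_def zero_cper.rep_eq)

lemma cf_sum[simp]: "cf (sum f S) \<theta> = (\<Sum>i\<in>S. cf (f i) \<theta>)"
  by (induction S rule: infinite_finite_induct) auto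

lemma norm_cper_eq: "norm x = (SUP \<theta>. \<bar>cf x \<theta>\<bar>)"
  by (simp add: norm_cper.rep_eq norm_bcontfun_def dist_bcontfun.rep_eq cf_def)

lemma cf_le_norm: "\<bar>cf x \<theta>\<bar> \<le> norm x"
  using norm_bounded[of "Rep_cper x" \<theta>] by (simp add: cf_def norm_cper.rep_eq)

lemma norm_cper_le: "(\<And>\<theta>. \<bar>cf x \<theta>\<bar> \<le> B) \<Longrightarrow> norm x \<le> B"
  using norm_bound[of "Rep_cper x" B] by (simp add: cf_def norm_cper.rep_eq)

lemma supn_cf: "supn (cf x) = norm x"
  using supn_eq_SUP[OF cf_CS1] norm_cper_eq by simp

lemma cf_cont: "continuous_on S (cf x)"
  by (simp add: cf_def)

lemma cf_per: "cf x (\<theta> + 2*pi) = cf x \<theta>"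
  using CS1_per[OF cf_CS1] .

lemma mk_add: "f \<in> CS1 \<Longrightarrow> g \<in> CS1 \<Longrightarrow> mk (\<lambda>\<theta>. f \<theta> + g \<theta>) = mk f + mk g"
  by (rule cf_eqI) (simp add: cf_mk CS1_def continuous_intros algebra_simps)


locale csg =
  fixes G :: "real \<Rightarrow> 'a::banach \<Rightarrow> 'a"
  assumes lin: "t \<ge> 0 \<Longrightarrow> bounded_linear (G t)"
    and contr: "t \<ge> 0 \<Longrightarrow> norm (G t x) \<le> norm x"
    and G0: "G 0 x = x"
    and Gadd: "t \<ge> 0 \<Longrightarrow> s \<ge> 0 \<Longrightarrow> G (t + s) x = G t (G s x)"
    and Gc0: "((\<lambda>t. G t x) \<longlongrightarrow> x) (at_right 0)"
begin

lemma G_diff: "t \<ge> 0 \<Longrightarrow> G t (a - b) = G t a - G t b"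
  using lin linear_diff bounded_linear.linear by blast
lemma G_add: "t \<ge> 0 \<Longrightarrow> G t (a + b) = G t a + G t b"
  using lin linear_add bounded_linear.linear by blast
lemma G_scale: "t \<ge> 0 \<Longrightarrow> G t (c *\<^sub>R a) = c *\<^sub>R G t a"
  using lin linear_scale bounded_linear.linear by blast
lemma G_zero: "t \<ge> 0 \<Longrightarrow> G t 0 = 0"
  using lin linear_0 bounded_linear.linear by blast

lemma Gc0_eps:
  assumes "e > 0" shows "\<exists>d>0. \<forall>h. 0 < h \<and> h < d \<longrightarrow> norm (G h x - x) < e"
proof -
  have "\<forall>\<^sub>F h in at_right 0. dist (G h x) x < e" using tendstoD[OF Gc0 assms] .
  then obtain d where "d > 0" "\<And>h. 0 < h \<Longrightarrow> h < d \<Longrightarrow> dist (G h x) x < e"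
    unfolding eventually_at_right_field by auto
  then show ?thesis by (auto simp: dist_norm)
qed

lemma cont_G: "continuous_on {0..} (\<lambda>t. G t x)"
  unfolding continuous_on_iff
proof (intro ballI allI impI)
  fix t0 e :: real assume t0: "t0 \<in> {0..}" and e: "0 < e"
  obtain d where d: "d > 0" and dd: "\<And>h. 0 < h \<Longrightarrow> h < d \<Longrightarrow> norm (G h x - x) < e"
    using Gc0_eps[OF e] by blast
  show "\<exists>d>0. \<forall>t\<in>{0..}. dist t t0 < d \<longrightarrow> dist (G t x) (G t0 x) < e"
  proof (intro exI[of _ d] conjI ballI impI)
    show "0 < d" using d .
  next
    fix t :: real assume t: "t \<in> {0..}" "dist t t0 < d"
    consider "t = t0" | "t > t0" | "t < t0" by linarith
    then show "dist (G t x) (G t0 x) < e"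
    proof cases
      case 1 then show ?thesis using e by simp
    next
      case 2
      have "G t x = G t0 (G (t - t0) x)" using Gadd[of t0 "t - t0"] t0 2 by simp
      then have "G t x - G t0 x = G t0 (G (t - t0) x - x)" using G_diff t0 by simp
      then have "norm (G t x - G t0 x) \<le> norm (G (t - t0) x - x)" using contr t0 by simp
      also have "\<dots> < e" using dd[of "t - t0"] 2 t by (simp add: dist_real_def)
      finally show ?thesis by (simp add: dist_norm)
    next
      case 3
      have "G t0 x = G t (G (t0 - t) x)" using Gadd[of t "t0 - t"] t 3 by simp
      then have "G t0 x - G t x = G t (G (t0 - t) x - x)" using G_diff t by simp
      then have "norm (G t0 x - G t x) \<le> norm (G (t0 - t) x - x)" using contr t by simp
      also have "\<dots> < e" using dd[of "t0 - t"] 3 t by (simp add: dist_real_def)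
      finally show ?thesis by (simp add: dist_norm norm_minus_commute)
    qed
  qed
qed

lemma cont_G2:
  assumes v: "continuous_on S v" and tau: "continuous_on S \<tau>" and pos: "\<And>s. s \<in> S \<Longrightarrow> \<tau> s \<ge> 0"
  shows "continuous_on S (\<lambda>s. G (\<tau> s) (v s))"
  unfolding continuous_on_def
proof
  fix s0 assume s0: "s0 \<in> S"
  have a: "((\<lambda>s. G (\<tau> s) (v s0)) \<longlongrightarrow> G (\<tau> s0) (v s0)) (at s0 within S)"
  proof -
    have "continuous_on S (\<lambda>s. G (\<tau> s) (v s0))"
      by (rule continuous_on_compose2[OF cont_G tau]) (use pos in auto)
    then show ?thesis using s0 continuous_on_def by blast
  qed
  have b: "((\<lambda>s. G (\<tau> s) (v s) - G (\<tau> s) (v s0)) \<longlongrightarrow> 0) (at s0 within S)"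
  proof (rule Lim_null_comparison)
    show "\<forall>\<^sub>F s in at s0 within S. norm (G (\<tau> s) (v s) - G (\<tau> s) (v s0)) \<le> norm (v s - v s0)"
      unfolding eventually_at_filter
      by (rule eventuallyI) (metis G_diff contr pos)
    have "(v \<longlongrightarrow> v s0) (at s0 within S)" using v s0 continuous_on_def by blast
    then show "((\<lambda>s. norm (v s - v s0)) \<longlongrightarrow> 0) (at s0 within S)"
      using tendsto_norm_zero_iff Lim_null by (metis LIM_zero)
  qed
  show "((\<lambda>s. G (\<tau> s) (v s)) \<longlongrightarrow> G (\<tau> s0) (v s0)) (at s0 within S)"
    using tendsto_add[OF a b] by simp
qed

end


lemma cont_on_from_bounded:
  fixes f :: "real \<Rightarrow> 'a::metric_space"
  assumes "\<And>T. T \<ge> 0 \<Longrightarrow> continuous_on {0..T} f"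
  shows "continuous_on {0..} f"
  unfolding continuous_on_iff
proof (intro ballI allI impI)
  fix t0 e :: real assume t0: "t0 \<in> {0..}" and e: "0 < e"
  have "continuous_on {0..t0+1} f" using assms t0 by simp
  then obtain d where d: "d > 0" and dd: "\<forall>t\<in>{0..t0+1}. dist t t0 < d \<longrightarrow> dist (f t) (f t0) < e"
    unfolding continuous_on_iff using t0 e by (metis atLeastAtMost_iff atLeast_iff le_add_same_cancel1 zero_le_one)
  show "\<exists>d>0. \<forall>t\<in>{0..}. dist t t0 < d \<longrightarrow> dist (f t) (f t0) < e"
    by (rule exI[of _ "min d 1"]) (use d dd in \<open>auto simp: dist_real_def\<close>)
qed

lemma integral_pow_rev:
  assumes "t \<ge> 0"
  shows "integral {0..t} (\<lambda>r. (t - r) ^ n) = t ^ Suc n / Suc n"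
proof -
  define F where "F = (\<lambda>r. - ((t - r) ^ (Suc n)) / real (Suc n))"
  have "((\<lambda>r. (t - r) ^ n) has_integral (F t - F 0)) {0..t}"
  proof (rule fundamental_theorem_of_calculus)
    show "0 \<le> t" by fact
    fix r assume "r \<in> {0..t}"
    show "(F has_vector_derivative (t - r) ^ n) (at r within {0..t})"
      unfolding has_real_derivative_iff_has_vector_derivative[symmetric] F_def
      by (auto intro!: derivative_eq_intros simp del: of_nat_Suc power_Suc)
  qed
  then show ?thesis by (simp add: integral_unique F_def)
qed

locale csgP = csg G for G :: "real \<Rightarrow> 'a::banach \<Rightarrow> 'a" +
  fixes P :: "'a \<Rightarrow> 'a" and K :: real
  assumes Plin: "bounded_linear P" and Kpos: "K > 0" and PK: "norm (P x) \<le> K * norm x"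
begin

definition conv :: "(real \<Rightarrow> 'a) \<Rightarrow> real \<Rightarrow> 'a" where
  "conv v t = integral {0..t} (\<lambda>r. G r (P (v (t - r))))"

lemma P_cont: "continuous_on S v \<Longrightarrow> continuous_on S (\<lambda>s. P (v s))"
  using Plin bounded_linear.continuous_on by blast

lemma conv_integrand_cont:
  assumes v: "continuous_on {0..} v" and t: "t \<le> t'"
  shows "continuous_on {0..t} (\<lambda>r. G r (P (v (t' - r))))"
proof (rule cont_G2)
  have "continuous_on {0..t} (\<lambda>r. v (t' - r))"
    by (rule continuous_on_compose2[OF v]) (use t in \<open>auto intro!: continuous_intros\<close>)
  then show "continuous_on {0..t} (\<lambda>r. P (v (t' - r)))" by (rule P_cont)
qed (auto intro!: continuous_intros)

lemma conv_integrable: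
  assumes v: "continuous_on {0..} v" and t: "t \<le> t'"
  shows "(\<lambda>r. G r (P (v (t' - r)))) integrable_on {0..t}"
  by (rule integrable_continuous_real[OF conv_integrand_cont[OF v t]])

lemma GP_bound: "r \<ge> 0 \<Longrightarrow> norm (G r (P y)) \<le> K * norm y"
  using contr PK order_trans by blast

lemma conv_lin:
  assumes v: "continuous_on {0..} v" and w: "continuous_on {0..} w" and t: "t \<ge> 0"
  shows "conv (\<lambda>s. a *\<^sub>R v s + b *\<^sub>R w s) t = a *\<^sub>R conv v t + b *\<^sub>R conv w t"
proof -
  have eq: "G r (P (a *\<^sub>R v (t - r) + b *\<^sub>R w (t - r))) = a *\<^sub>R G r (P (v (t - r))) + b *\<^sub>R G r (P (w (t - r)))"
    if "r \<in> {0..t}" for r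
    using that Plin G_add G_scale
    by (simp add: bounded_linear.linear linear_add linear_scale)
  have "conv (\<lambda>s. a *\<^sub>R v s + b *\<^sub>R w s) t = integral {0..t} (\<lambda>r. a *\<^sub>R G r (P (v (t - r))) + b *\<^sub>R G r (P (w (t - r))))"
    unfolding conv_def by (rule integral_cong) (use eq in auto)
  also have "\<dots> = a *\<^sub>R conv v t + b *\<^sub>R conv w t"
    unfolding conv_def
    by (subst integral_add) (auto intro!: integrable_on_cmult_iff[THEN iffD2] conv_integrable[OF v] conv_integrable[OF w] integrable_cmul)
  finally show ?thesis .
qed

lemma conv_diff:
  assumes v: "continuous_on {0..} v" and w: "continuous_on {0..} w" and t: "t \<ge> 0"
  shows "conv (\<lambda>s. v s - w s) t = conv v t - conv w t"
  using conv_lin[OF v w t, of 1 "-1"] by simp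

lemma conv_bound:
  assumes v: "continuous_on {0..} v" and t: "t \<ge> 0"
    and b: "\<And>s. s \<in> {0..t} \<Longrightarrow> norm (v s) \<le> C * s ^ n"
  shows "norm (conv v t) \<le> K * C * t ^ Suc n / Suc n"
proof -
  have "norm (conv v t) \<le> integral {0..t} (\<lambda>r. K * C * (t - r) ^ n)"
    unfolding conv_def
  proof (rule integral_norm_bound_integral)
    show "(\<lambda>r. G r (P (v (t - r)))) integrable_on {0..t}" by (rule conv_integrable[OF v]) simp
    show "(\<lambda>r. K * C * (t - r) ^ n) integrable_on {0..t}"
      by (rule integrable_continuous_real) (auto intro!: continuous_intros)
    fix r assume r: "r \<in> {0..t}"
    have "norm (G r (P (v (t - r)))) \<le> K * norm (v (t - r))" using GP_bound r by simp
    also have "\<dots> \<le> K * (C * (t - r) ^ n)" using b[of "t - r"] r Kpos by (intro mult_left_mono) auto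
    finally show "norm (G r (P (v (t - r)))) \<le> K * C * (t - r) ^ n" by simp
  qed
  also have "\<dots> = K * C * t ^ Suc n / Suc n"
    using integral_pow_rev[OF t, of n] by simp
  finally show ?thesis .
qed

lemma conv_diff_bound:
  assumes v: "continuous_on {0..} v" and t: "0 \<le> t" "t \<le> t'"
    and eta: "\<And>r. r \<in> {0..t} \<Longrightarrow> norm (v (t' - r) - v (t - r)) \<le> \<eta>"
    and M: "\<And>s. s \<in> {0..t'} \<Longrightarrow> norm (v s) \<le> M"
  shows "norm (conv v t' - conv v t) \<le> t * (K * \<eta>) + (t' - t) * (K * M)"
proof -
  define f' where "f' = (\<lambda>r. G r (P (v (t' - r))))"
  define f where "f = (\<lambda>r. G r (P (v (t - r))))"
  have cf': "continuous_on {0..t'} f'" unfolding f'_def by (rule conv_integrand_cont[OF v]) simp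
  have cf: "continuous_on {0..t} f" unfolding f_def by (rule conv_integrand_cont[OF v]) simp
  have cf'': "continuous_on {0..t} f'" using cf' continuous_on_subset t by fastforce
  have cf''': "continuous_on {t..t'} f'" using cf' continuous_on_subset t by fastforce
  have "conv v t' = integral {0..t} f' + integral {t..t'} f'"
    unfolding conv_def f'_def[symmetric]
    by (rule Henstock_Kurzweil_Integration.integral_combine[symmetric]) (use t cf' integrable_continuous_real in auto)
  moreover have "conv v t = integral {0..t} f" unfolding conv_def f_def ..
  ultimately have "conv v t' - conv v t = integral {0..t} (\<lambda>r. f' r - f r) + integral {t..t'} f'"
    using integral_diff[OF integrable_continuous_real[OF cf''] integrable_continuous_real[OF cf]] by simp
  moreover have "norm (integral {0..t} (\<lambda>r. f' r - f r)) \<le> (K * \<eta>) * (t - 0)"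
  proof (rule integral_bound)
    show "continuous_on {0..t} (\<lambda>r. f' r - f r)" using cf cf'' by (intro continuous_intros)
    fix r assume r: "r \<in> {0..t}"
    have "f' r - f r = G r (P (v (t' - r) - v (t - r)))"
      unfolding f'_def f_def using r G_diff Plin by (simp add: linear_diff bounded_linear.linear)
    then have "norm (f' r - f r) \<le> K * norm (v (t' - r) - v (t - r))" using GP_bound r by simp
    also have "\<dots> \<le> K * \<eta>" using eta[OF r] Kpos by simp
    finally show "norm (f' r - f r) \<le> K * \<eta>" .
  qed (use t in auto)
  moreover have "norm (integral {t..t'} f') \<le> (K * M) * (t' - t)"
  proof (rule integral_bound)
    fix r assume r: "r \<in> {t..t'}"
    have "norm (f' r) \<le> K * norm (v (t' - r))" unfolding f'_def using GP_bound r t by simp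
    also have "\<dots> \<le> K * M" using M[of "t' - r"] r t Kpos by simp
    finally show "norm (f' r) \<le> K * M" .
  qed (use t cf''' in auto)
  ultimately show ?thesis
    by (smt (verit, best) mult.commute norm_triangle_ineq)
qed

end


context csgP
begin

lemma cont_bounded_on:
  assumes "continuous_on {0..T} (v :: real \<Rightarrow> 'a)"
  obtains M where "M > 0" "\<And>s. s \<in> {0..T} \<Longrightarrow> norm (v s) \<le> M"
proof -
  have "compact (v ` {0..T})" by (rule compact_continuous_image[OF assms]) simp
  then obtain M where "M > 0" "\<forall>y\<in>v ` {0..T}. norm y \<le> M"
    using compact_imp_bounded bounded_pos by metis
  then show ?thesis using that by auto
qed

lemma conv_cont:
  assumes v: "continuous_on {0..} v"
  shows "continuous_on {0..} (conv v)"
  unfolding continuous_on_iff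
proof (intro ballI allI impI)
  fix t0 e :: real assume t0: "t0 \<in> {0..}" and e: "0 < e"
  define T where "T = t0 + 1"
  have vT: "continuous_on {0..T} v" using v continuous_on_subset by fastforce
  obtain M where M: "M > 0" "\<And>s. s \<in> {0..T} \<Longrightarrow> norm (v s) \<le> M"
    using cont_bounded_on[OF vT] by blast
  have uc: "uniformly_continuous_on {0..T} v" by (rule compact_uniformly_continuous[OF vT]) simp
  define c where "c = e / (2 * (T * K + 1))"
  have T0: "T > 0" using t0 by (simp add: T_def)
  have c: "c > 0" unfolding c_def using e T0 Kpos by (simp add: add_pos_nonneg)
  obtain d1 where d1: "d1 > 0" and dd1: "\<And>a b. a \<in> {0..T} \<Longrightarrow> b \<in> {0..T} \<Longrightarrow> dist b a < d1 \<Longrightarrow> dist (v b) (v a) < c"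
    using uc c unfolding uniformly_continuous_on_def by metis
  define d2 where "d2 = e / (2 * (K * M + 1))"
  have d2: "d2 > 0" unfolding d2_def using e M Kpos by (simp add: add_pos_nonneg)
  have key: "norm (conv v b - conv v a) < e" if ab: "0 \<le> a" "a \<le> b" "b \<le> T" "b - a < d1" "b - a < d2" for a b
  proof -
    have "norm (conv v b - conv v a) \<le> a * (K * c) + (b - a) * (K * M)"
    proof (rule conv_diff_bound[OF v])
      fix r assume r: "r \<in> {0..a}"
      have "dist (v (b - r)) (v (a - r)) < c"
        by (rule dd1) (use r ab in \<open>auto simp: dist_real_def\<close>)
      then show "norm (v (b - r) - v (a - r)) \<le> c" by (simp add: dist_norm)
    next
      fix s assume "s \<in> {0..b}" then show "norm (v s) \<le> M" using M ab by auto
    qed (use ab in auto)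
    also have "a * (K * c) \<le> T * (K * c)" using ab c Kpos by (intro mult_right_mono) auto
    also have "T * (K * c) < e / 2"
    proof -
      have "T * (K * c) = e / 2 * (T * K / (T * K + 1))" unfolding c_def by (simp add: field_simps)
      also have "\<dots> < e / 2 * 1"
      proof (rule mult_strict_left_mono)
        have tk: "0 < T * K" using T0 Kpos by simp
        show "T * K / (T * K + 1) < 1" using divide_less_eq_1_pos[of "T*K+1" "T*K"] tk by linarith
      qed (use e in simp)
      finally show ?thesis by simp
    qed
    also have "(b - a) * (K * M) \<le> d2 * (K * M)" using ab Kpos M by (intro mult_right_mono) auto
    also have "d2 * (K * M) < e / 2"
    proof -
      have "d2 * (K * M) = e / 2 * (K * M / (K * M + 1))" unfolding d2_def by (simp add: field_simps)
      also have "\<dots> < e / 2 * 1"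
      proof (rule mult_strict_left_mono)
        have tk: "0 < K * M" using M Kpos by simp
        show "K * M / (K * M + 1) < 1" using divide_less_eq_1_pos[of "K*M+1" "K*M"] tk by linarith
      qed (use e in simp)
      finally show ?thesis by simp
    qed
    finally show ?thesis by simp
  qed
  show "\<exists>d>0. \<forall>t\<in>{0..}. dist t t0 < d \<longrightarrow> dist (conv v t) (conv v t0) < e"
  proof (intro exI[of _ "min 1 (min d1 d2)"] conjI ballI impI)
    show "0 < min 1 (min d1 d2)" using d1 d2 by simp
    fix t :: real assume t: "t \<in> {0..}" "dist t t0 < min 1 (min d1 d2)"
    show "dist (conv v t) (conv v t0) < e"
    proof (cases "t \<le> t0")
      case True
      then show ?thesis using key[of t t0] t t0 by (auto simp: dist_norm dist_real_def T_def norm_minus_commute)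
    next
      case False
      then show ?thesis using key[of t0 t] t t0 by (auto simp: dist_norm dist_real_def T_def)
    qed
  qed
qed

end


context csgP
begin

fun pic :: "'a \<Rightarrow> nat \<Rightarrow> real \<Rightarrow> 'a" where
  "pic x 0 = (\<lambda>t. G t x)"
| "pic x (Suc n) = (\<lambda>t. G t x + conv (pic x n) t)"

declare pic.simps[simp del]

lemma pic_0: "pic x 0 t = G t x" by (simp add: pic.simps)
lemma pic_Suc: "pic x (Suc n) t = G t x + conv (pic x n) t" by (simp add: pic.simps)

lemma pic_cont: "continuous_on {0..} (pic x n)"
proof (induction n)
  case 0 show ?case by (simp add: pic.simps cont_G)
next
  case (Suc n)
  have "continuous_on {0..} (\<lambda>t. G t x + conv (pic x n) t)"
    by (intro continuous_on_add cont_G conv_cont[OF Suc.IH, unfolded comp_def])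
  then show ?case by (simp add: pic.simps)
qed

definition D :: "'a \<Rightarrow> nat \<Rightarrow> real \<Rightarrow> 'a" where
  "D x n t = pic x (Suc n) t - pic x n t"

lemma D_cont: "continuous_on {0..} (D x n)"
  unfolding D_def by (intro continuous_intros pic_cont)

lemma D_Suc: assumes "t \<ge> 0" shows "D x (Suc n) t = conv (D x n) t"
proof -
  have "D x (Suc n) t = conv (pic x (Suc n)) t - conv (pic x n) t"
    unfolding D_def pic_Suc[of x "Suc n"] pic_Suc[of x n] by simp
  also have "\<dots> = conv (\<lambda>s. pic x (Suc n) s - pic x n s) t"
    by (rule conv_diff[OF pic_cont pic_cont assms, symmetric])
  also have "(\<lambda>s. pic x (Suc n) s - pic x n s) = D x n" by (simp add: D_def[abs_def])
  finally show ?thesis .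
qed

lemma D_bound: "t \<ge> 0 \<Longrightarrow> norm (D x n t) \<le> norm x * K ^ Suc n * t ^ Suc n / fact (Suc n)"
proof (induction n arbitrary: t)
  case 0
  have "norm (D x 0 t) = norm (conv (pic x 0) t)" by (simp add: D_def pic_Suc pic_0)
  also have "\<dots> \<le> K * norm x * t ^ Suc 0 / Suc 0"
    by (rule conv_bound[OF pic_cont \<open>t \<ge> 0\<close>]) (auto intro: contr simp: pic_0)
  finally show ?case by (simp add: algebra_simps)
next
  case (Suc n)
  have "norm (D x (Suc n) t) = norm (conv (D x n) t)" using D_Suc Suc.prems by simp
  also have "\<dots> \<le> K * (norm x * K ^ Suc n / fact (Suc n)) * t ^ Suc (Suc n) / Suc (Suc n)"
    by (rule conv_bound[OF D_cont \<open>t \<ge> 0\<close>]) (use Suc.IH in auto)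
  also have "\<dots> = norm x * K ^ Suc (Suc n) * t ^ Suc (Suc n) / fact (Suc (Suc n))"
  proof -
    have f: "(fact (Suc (Suc n)) :: real) = real (Suc (Suc n)) * fact (Suc n)" by (rule fact_Suc)
    have p: "(0::real) < real (Suc (Suc n)) * fact (Suc n)" by (intro mult_pos_pos) auto
    show ?thesis unfolding f using p by (simp only: power_Suc) (simp add: divide_simps)
  qed
  finally show ?case .
qed

lemma pic_sum: "pic x n t = G t x + (\<Sum>k<n. D x k t)"
proof (induction n)
  case 0 show ?case by (simp add: pic_0)
next
  case (Suc n)
  have "pic x (Suc n) t = pic x n t + D x n t" by (simp add: D_def)
  then show ?case using Suc.IH by simp
qed

definition u :: "'a \<Rightarrow> real \<Rightarrow> 'a" where
  "u x t = G t x + (\<Sum>k. D x k t)"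

lemma summable_expK: "summable (\<lambda>k. norm x * K ^ Suc k * T ^ Suc k / fact (Suc k))"
proof -
  have "summable (\<lambda>k. (K * T) ^ k / fact k)"
    using summable_exp[of "K * T"] by (simp add: divide_inverse mult.commute)
  then have "summable (\<lambda>k. (K * T) ^ (k + 1) / fact (k + 1))"
    by (rule summable_ignore_initial_segment)
  then have "summable (\<lambda>k. (K * T) ^ Suc k / fact (Suc k))"
    by (simp only: Suc_eq_plus1)
  then have "summable (\<lambda>k. norm x * ((K * T) ^ Suc k / fact (Suc k)))" by (rule summable_mult)
  then show ?thesis unfolding power_mult_distrib by (simp only: mult.assoc times_divide_eq_right)
qed

lemma D_summable_unif:
  assumes "T \<ge> 0"
  shows "uniform_limit {0..T} (\<lambda>n t. \<Sum>k<n. D x k t) (\<lambda>t. \<Sum>k. D x k t) sequentially"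
proof (rule Weierstrass_m_test[OF _ summable_expK])
  fix n t assume t: "t \<in> {0..T}"
  have "norm (D x n t) \<le> norm x * K ^ Suc n * t ^ Suc n / fact (Suc n)" using D_bound t by simp
  also have "\<dots> \<le> norm x * K ^ Suc n * T ^ Suc n / fact (Suc n)"
    using t Kpos by (intro divide_right_mono mult_left_mono power_mono) auto
  finally show "norm (D x n t) \<le> norm x * K ^ Suc n * T ^ Suc n / fact (Suc n)" .
qed

lemma pic_unif:
  assumes "T \<ge> 0"
  shows "uniform_limit {0..T} (pic x) (u x) sequentially"
proof -
  have "uniform_limit {0..T} (\<lambda>n t. G t x + (\<Sum>k<n. D x k t)) (\<lambda>t. G t x + (\<Sum>k. D x k t)) sequentially"
    using uniform_limit_add[OF uniform_limit_const[where S="{0..T}" and c="\<lambda>t. G t x" and f=sequentially] D_summable_unif[OF assms]] .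
  moreover have "pic x = (\<lambda>n t. G t x + (\<Sum>k<n. D x k t))"
    by (intro ext) (rule pic_sum)
  moreover have "u x = (\<lambda>t. G t x + (\<Sum>k. D x k t))"
    by (intro ext) (simp add: u_def)
  ultimately show ?thesis by simp
qed

lemma u_cont: "continuous_on {0..} (u x)"
proof (rule cont_on_from_bounded)
  fix T :: real assume T: "T \<ge> 0"
  show "continuous_on {0..T} (u x)"
  proof (rule uniform_limit_theorem[OF _ pic_unif[OF T]])
    show "\<forall>\<^sub>F n in sequentially. continuous_on {0..T} (pic x n)"
      by (intro always_eventually allI continuous_on_subset[OF pic_cont]) auto
  qed simp
qed

lemma u_mild: assumes t: "t \<ge> 0" shows "u x t = G t x + conv (u x) t"
proof -
  have "(\<lambda>n. pic x n t) \<longlonglongrightarrow> u x t"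
    by (rule tendsto_uniform_limitI[OF pic_unif[OF t]]) (use t in simp)
  then have l1: "(\<lambda>n. pic x (Suc n) t) \<longlonglongrightarrow> u x t" by (rule LIMSEQ_Suc)
  have "(\<lambda>n. conv (pic x n) t) \<longlonglongrightarrow> conv (u x) t"
  proof (rule tendstoI)
    fix e :: real assume e: "e > 0"
    define e' where "e' = e / (2 * K * (t + 1))"
    have e': "e' > 0" unfolding e'_def using e Kpos t by simp
    have "\<forall>\<^sub>F n in sequentially. \<forall>s\<in>{0..t}. dist (pic x n s) (u x s) < e'"
      using uniform_limitD[OF pic_unif[OF t] e'] .
    then show "\<forall>\<^sub>F n in sequentially. dist (conv (pic x n) t) (conv (u x) t) < e"
    proof eventually_elim
      case (elim n)
      have "norm (conv (\<lambda>s. pic x n s - u x s) t) \<le> K * e' * t ^ Suc 0 / Suc 0"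
        by (rule conv_bound[OF continuous_on_diff[OF pic_cont u_cont] t]) (use elim in \<open>auto simp: dist_norm less_imp_le\<close>)
      also have "\<dots> < e"
      proof -
        have t1: "t + 1 > 0" using t by simp
        have d: "2 * K * (t + 1) \<noteq> 0" using Kpos t1 by simp
        have "e' * (2 * K * (t + 1)) = e" unfolding e'_def using d by simp
        then have a: "K * e' * (t + 1) = e / 2" by (simp add: algebra_simps)
        have "K * e' * t \<le> K * e' * (t + 1)" using Kpos e' by simp
        then show ?thesis using a e by simp
      qed
      finally show ?case using conv_diff[OF pic_cont u_cont t] by (simp add: dist_norm)
    qed
  qed
  then have "(\<lambda>n. G t x + conv (pic x n) t) \<longlonglongrightarrow> G t x + conv (u x) t"
    by (rule tendsto_add[OF tendsto_const])
  then have l2: "(\<lambda>n. pic x (Suc n) t) \<longlonglongrightarrow> G t x + conv (u x) t"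
    by (simp only: pic_Suc)
  show ?thesis using LIMSEQ_unique[OF l1 l2] .
qed

end


context csgP
begin

lemma conv_0: "conv v 0 = 0"
  by (simp add: conv_def)

lemma u_0: "u x 0 = x"
  using u_mild[of 0 x] by (simp add: G0 conv_0)

lemma uniq:
  assumes v: "continuous_on {0..} v" and eq: "\<And>t. t \<ge> 0 \<Longrightarrow> v t = conv v t" and t0: "t0 \<ge> 0"
  shows "v t0 = 0"
proof -
  have vT: "continuous_on {0..t0} v" using v continuous_on_subset by fastforce
  obtain M where M: "M > 0" "\<And>s. s \<in> {0..t0} \<Longrightarrow> norm (v s) \<le> M"
    using cont_bounded_on[OF vT] by blast
  have b: "\<forall>s\<in>{0..t0}. norm (v s) \<le> M * K ^ n / fact n * s ^ n" for n
  proof (induction n)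
    case 0 then show ?case using M by simp
  next
    case (Suc n)
    show ?case
    proof
      fix s assume s: "s \<in> {0..t0}"
      have "norm (v s) = norm (conv v s)" using eq s by simp
      also have "\<dots> \<le> K * (M * K ^ n / fact n) * s ^ Suc n / Suc n"
        by (rule conv_bound[OF v]) (use s Suc.IH in auto)
      also have "\<dots> = M * K ^ Suc n / fact (Suc n) * s ^ Suc n"
      proof -
        have f: "(fact (Suc n) :: real) = real (Suc n) * fact n" by (rule fact_Suc)
        have p: "(0::real) < real (Suc n) * fact n" by (intro mult_pos_pos) auto
        show ?thesis unfolding f using p by (simp only: power_Suc) (simp add: divide_simps)
      qed
      finally show "norm (v s) \<le> M * K ^ Suc n / fact (Suc n) * s ^ Suc n" .
    qed
  qed
  have "(\<lambda>n. inverse (fact n) * (K * t0) ^ n) \<longlonglongrightarrow> 0"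
    using summable_LIMSEQ_zero[OF summable_exp[of "K * t0"]] by simp
  then have "(\<lambda>n. M * (inverse (fact n) * (K * t0) ^ n)) \<longlonglongrightarrow> M * 0"
    by (rule tendsto_mult[OF tendsto_const])
  moreover have "norm (v t0) \<le> M * (inverse (fact n) * (K * t0) ^ n)" for n
    using b[of n] t0 by (auto simp: power_mult_distrib divide_inverse mult_ac)
  ultimately have "norm (v t0) \<le> 0"
    by (intro tendsto_le[OF _ _ tendsto_const, where F=sequentially]) (auto)
  then show ?thesis by simp
qed

lemma u_lin:
  assumes t: "t \<ge> 0"
  shows "u (a *\<^sub>R x + b *\<^sub>R y) t = a *\<^sub>R u x t + b *\<^sub>R u y t"
proof -
  define w where "w = (\<lambda>t. u (a *\<^sub>R x + b *\<^sub>R y) t - (a *\<^sub>R u x t + b *\<^sub>R u y t))"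
  have wc: "continuous_on {0..} w" unfolding w_def by (intro continuous_intros u_cont)
  have ab: "continuous_on {0..} (\<lambda>s. a *\<^sub>R u x s + b *\<^sub>R u y s)" by (intro continuous_intros u_cont)
  have "w t = conv w t" if t: "t \<ge> 0" for t
  proof -
    have "a *\<^sub>R u x t + b *\<^sub>R u y t = G t (a *\<^sub>R x + b *\<^sub>R y) + conv (\<lambda>s. a *\<^sub>R u x s + b *\<^sub>R u y s) t"
      using u_mild[OF t, of x] u_mild[OF t, of y] conv_lin[OF u_cont u_cont t, of a x b y] G_add[OF t] G_scale[OF t]
      by (simp add: algebra_simps)
    then have "w t = conv (u (a *\<^sub>R x + b *\<^sub>R y)) t - conv (\<lambda>s. a *\<^sub>R u x s + b *\<^sub>R u y s) t"
      unfolding w_def using u_mild[OF t, of "a *\<^sub>R x + b *\<^sub>R y"] by simp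
    also have "\<dots> = conv w t" unfolding w_def by (rule conv_diff[OF u_cont ab t, symmetric])
    finally show ?thesis .
  qed
  then have "w t = 0" using uniq[OF wc] t by blast
  then show ?thesis by (simp add: w_def)
qed

lemma u_bound:
  assumes t: "t \<ge> 0"
  shows "norm (u x t) \<le> norm x * exp (K * t)"
proof -
  define B where "B = (\<lambda>k. norm x * K ^ Suc k * t ^ Suc k / fact (Suc k))"
  have sB: "summable B" unfolding B_def by (rule summable_expK)
  have Db: "norm (D x k t) \<le> B k" for k unfolding B_def using D_bound[OF t] .
  have sD: "summable (\<lambda>k. norm (D x k t))"
    by (rule summable_comparison_test[OF _ sB]) (use Db in auto)
  have "norm (\<Sum>k. D x k t) \<le> (\<Sum>k. norm (D x k t))" by (rule summable_norm[OF sD])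
  also have "\<dots> \<le> (\<Sum>k. B k)" by (rule suminf_le[OF Db sD sB])
  also have "(\<Sum>k. B k) = norm x * (exp (K * t) - 1)"
  proof -
    have "(\<lambda>n. (K * t) ^ n / fact n) sums exp (K * t)"
      using exp_converges[of "K * t"] by (simp add: divide_inverse mult.commute)
    then have "(\<lambda>n. (K * t) ^ Suc n / fact (Suc n)) sums (exp (K * t) - 1)"
      using sums_Suc_iff[of "\<lambda>n. (K * t) ^ n / fact n" "exp (K * t) - 1"] by simp
    then have "(\<lambda>n. norm x * ((K * t) ^ Suc n / fact (Suc n))) sums (norm x * (exp (K * t) - 1))"
      by (rule sums_mult)
    then have "B sums (norm x * (exp (K * t) - 1))"
      unfolding B_def power_mult_distrib by (simp only: mult.assoc times_divide_eq_right)
    then show ?thesis by (rule sums_unique[symmetric])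
  qed
  finally have a: "norm (\<Sum>k. D x k t) \<le> norm x * (exp (K * t) - 1)" .
  have "norm (u x t) \<le> norm (G t x) + norm (\<Sum>k. D x k t)" unfolding u_def by (rule norm_triangle_ineq)
  also have "\<dots> \<le> norm x + norm x * (exp (K * t) - 1)" using contr[OF t, of x] a by linarith
  finally show ?thesis by (simp add: algebra_simps)
qed

lemma u_semigroup:
  assumes t: "t \<ge> 0" and s: "s \<ge> 0"
  shows "u x (t + s) = u (u x s) t"
proof -
  define y where "y = u x s"
  define w where "w = (\<lambda>t. u x (t + s))"
  have wc: "continuous_on {0..} w" unfolding w_def
    by (rule continuous_on_compose2[OF u_cont]) (use s in \<open>auto intro!: continuous_intros\<close>)
  have wm: "w t = G t y + conv w t" if t: "t \<ge> 0" for t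
  proof -
    define f where "f = (\<lambda>r. G r (P (u x (t + s - r))))"
    have fc: "continuous_on {0..t+s} f" unfolding f_def by (rule conv_integrand_cont[OF u_cont]) simp
    have "conv (u x) (t + s) = integral {0..t} f + integral {t..t+s} f"
      unfolding conv_def f_def[symmetric]
      by (rule Henstock_Kurzweil_Integration.integral_combine[symmetric]) (use t s fc integrable_continuous_real in auto)
    moreover have "integral {0..t} f = conv w t"
      unfolding conv_def f_def w_def by (rule integral_cong) (simp add: algebra_simps)
    moreover have "integral {t..t+s} f = G t (conv (u x) s)"
    proof -
      have "integral {t..t+s} f = integral {t-t..t+s-t} (\<lambda>r. f (r + t))"
        by (rule integral_shift_real_ivl[symmetric])
      also have "\<dots> = integral {0..s} (\<lambda>r. f (r + t))" by simp
      also have "\<dots> = integral {0..s} (\<lambda>r. G t (G r (P (u x (s - r)))))"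
        unfolding f_def
      proof (rule integral_cong)
        fix r assume r: "r \<in> {0..s}"
        have "G (r + t) (P (u x (s - r))) = G t (G r (P (u x (s - r))))"
          using Gadd[of t r] t r by (simp add: add.commute)
        then show "G (r + t) (P (u x (t + s - (r + t)))) = G t (G r (P (u x (s - r))))"
          by (simp add: algebra_simps)
      qed
      also have "\<dots> = integral {0..s} (G t \<circ> (\<lambda>r. G r (P (u x (s - r)))))" by (simp add: comp_def)
      also have "\<dots> = G t (conv (u x) s)"
        unfolding conv_def by (rule integral_linear[OF conv_integrable[OF u_cont] lin[OF t]]) simp
      finally show ?thesis .
    qed
    ultimately have "w t = G (t + s) x + conv w t + G t (conv (u x) s)"
      unfolding w_def using u_mild[of "t + s" x] t s by simp
    also have "\<dots> = G t (G s x + conv (u x) s) + conv w t"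
      using Gadd[OF t s] G_add[OF t] by simp
    also have "G s x + conv (u x) s = y" unfolding y_def using u_mild[OF s] by simp
    finally show ?thesis .
  qed
  define v where "v = (\<lambda>t. w t - u y t)"
  have vc: "continuous_on {0..} v" unfolding v_def by (intro continuous_intros wc u_cont)
  have "v t = conv v t" if t: "t \<ge> 0" for t
  proof -
    have "v t = conv w t - conv (u y) t" unfolding v_def using wm[OF t] u_mild[OF t, of y] by simp
    also have "\<dots> = conv v t" unfolding v_def by (rule conv_diff[OF wc u_cont t, symmetric])
    finally show ?thesis .
  qed
  then have "v t = 0" using uniq[OF vc] t by blast
  then show ?thesis by (simp add: v_def w_def y_def)
qed

lemma u_cont0: "((\<lambda>h. u x h) \<longlongrightarrow> x) (at_right 0)"
proof -
  have "((\<lambda>h. u x h) \<longlongrightarrow> u x 0) (at 0 within {0..})"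
    using u_cont[of x] continuous_on_def by (metis atLeast_iff order_refl)
  then have "((\<lambda>h. u x h) \<longlongrightarrow> u x 0) (at 0 within {0<..})"
    by (rule tendsto_within_subset) auto
  then show ?thesis by (simp add: u_0)
qed

lemma u_gen_diff: "((\<lambda>h. (u x h - G h x) /\<^sub>R h) \<longlongrightarrow> P x) (at_right 0)"
proof (rule tendstoI)
  fix e :: real assume e: "e > 0"
  have e2: "e / 4 > 0" using e by simp
  have eK: "e / 4 / K > 0" using e2 Kpos by simp
  have "\<forall>\<^sub>F h in at_right 0. dist (u x h) x < e / 4 / K" using tendstoD[OF u_cont0 eK] .
  then obtain d1 where d1: "d1 > 0" and dd1: "\<And>h. 0 < h \<Longrightarrow> h < d1 \<Longrightarrow> dist (u x h) x < e / 4 / K"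
    unfolding eventually_at_right_field by auto
  obtain d2 where d2: "d2 > 0" and dd2: "\<And>h. 0 < h \<and> h < d2 \<Longrightarrow> norm (G h (P x) - P x) < e / 4"
    using Gc0_eps[OF e2, of "P x"] by blast
  show "\<forall>\<^sub>F h in at_right 0. dist ((u x h - G h x) /\<^sub>R h) (P x) < e"
    unfolding eventually_at_right_field
  proof (intro exI[of _ "min d1 d2"] conjI allI impI)
    show "0 < min d1 d2" using d1 d2 by simp
    fix h :: real assume h0: "0 < h" and hlt: "h < min d1 d2"
    have h: "0 < h \<and> h < min d1 d2" using h0 hlt by simp
    define f where "f = (\<lambda>r. G r (P (u x (h - r))))"
    have fc: "continuous_on {0..h} f" unfolding f_def by (rule conv_integrand_cont[OF u_cont]) simp
    have i0: "u x h - G h x = integral {0..h} f" using u_mild[of h x] h0 by (simp add: conv_def f_def)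
    have i1: "integral {0..h} (\<lambda>r. f r - P x) = integral {0..h} f - integral {0..h} (\<lambda>r. P x)"
      by (rule integral_diff[OF integrable_continuous_real[OF fc] integrable_const_ivl])
    have i2: "integral {0..h} (\<lambda>r. P x) = h *\<^sub>R P x" using h0 by simp
    have eq: "u x h - G h x - h *\<^sub>R P x = integral {0..h} (\<lambda>r. f r - P x)"
      by (simp only: i0 i1 i2)
    have "norm (integral {0..h} (\<lambda>r. f r - P x)) \<le> e / 2 * (h - 0)"
    proof (rule integral_bound)
      show "continuous_on {0..h} (\<lambda>r. f r - P x)" using fc by (intro continuous_intros)
      fix r assume r: "r \<in> {0..h}"
      have "f r - P x = G r (P (u x (h - r)) - P x) + (G r (P x) - P x)"
        unfolding f_def using G_diff r by simp
      then have "norm (f r - P x) \<le> norm (G r (P (u x (h - r)) - P x)) + norm (G r (P x) - P x)"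
        by (metis norm_triangle_ineq)
      also have "norm (G r (P (u x (h - r)) - P x)) \<le> e / 4"
      proof -
        have "norm (G r (P (u x (h - r)) - P x)) \<le> norm (P (u x (h - r) - x))"
          using contr r Plin by (simp add: linear_diff bounded_linear.linear)
        also have "\<dots> \<le> K * norm (u x (h - r) - x)" by (rule PK)
        also have "\<dots> \<le> K * (e / 4 / K)"
        proof (cases "r = h")
          case True then show ?thesis using u_0 e Kpos by simp
        next
          case False
          then have "dist (u x (h - r)) x < e / 4 / K" using r h by (intro dd1) auto
          then have "norm (u x (h - r) - x) \<le> e / 4 / K" by (simp add: dist_norm)
          then show ?thesis using Kpos by (intro mult_left_mono) auto
        qed
        also have "\<dots> = e / 4" using Kpos by simp
        finally show ?thesis .
      qed
      also have "norm (G r (P x) - P x) \<le> e / 4"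
      proof (cases "r = 0")
        case True then show ?thesis using G0 e by simp
      next
        case False then show ?thesis using dd2[of r] r h by auto
      qed
      finally show "norm (f r - P x) \<le> e / 2" by simp
    qed (use h0 in auto)
    then have "norm (u x h - G h x - h *\<^sub>R P x) \<le> e / 2 * h" using eq by simp
    then have "norm (u x h - G h x - h *\<^sub>R P x) / h \<le> e / 2" using h0 by (simp add: pos_divide_le_eq)
    moreover have "norm ((u x h - G h x - h *\<^sub>R P x) /\<^sub>R h) = norm (u x h - G h x - h *\<^sub>R P x) / h"
      using h0 by (simp add: divide_inverse mult.commute)
    ultimately have "norm ((u x h - G h x - h *\<^sub>R P x) /\<^sub>R h) \<le> e / 2" by simp
    moreover have "(u x h - G h x - h *\<^sub>R P x) /\<^sub>R h = (u x h - G h x) /\<^sub>R h - P x"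
      using h0 by (simp add: algebra_simps)
    ultimately have "dist ((u x h - G h x) /\<^sub>R h) (P x) \<le> e / 2" by (simp add: dist_norm)
    then show "dist ((u x h - G h x) /\<^sub>R h) (P x) < e" using e by simp
  qed
qed

lemma u_decomp:
  assumes e: "0 \<le> \<epsilon>" "\<epsilon> \<le> t"
  shows "norm (u x t - G \<epsilon> (u x (t - \<epsilon>))) \<le> \<epsilon> * K * exp (K * t) * norm x"
proof -
  define y where "y = u x (t - \<epsilon>)"
  have "u x t = u y \<epsilon>" unfolding y_def using u_semigroup[of \<epsilon> "t - \<epsilon>" x] e by simp
  also have "\<dots> = G \<epsilon> y + conv (u y) \<epsilon>" using u_mild e by simp
  finally have a: "u x t - G \<epsilon> y = conv (u y) \<epsilon>" by simp
  have "norm (conv (u y) \<epsilon>) \<le> K * (norm y * exp (K * \<epsilon>)) * \<epsilon> ^ Suc 0 / Suc 0"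
  proof (rule conv_bound[OF u_cont e(1)])
    fix s assume s: "s \<in> {0..\<epsilon>}"
    have "norm (u y s) \<le> norm y * exp (K * s)" using u_bound s by simp
    also have "\<dots> \<le> norm y * exp (K * \<epsilon>)" using s Kpos by (intro mult_left_mono) auto
    finally show "norm (u y s) \<le> norm y * exp (K * \<epsilon>) * s ^ 0" by simp
  qed
  also have "\<dots> \<le> K * (norm x * exp (K * (t - \<epsilon>)) * exp (K * \<epsilon>)) * \<epsilon>"
    using u_bound[of "t - \<epsilon>" x] e Kpos unfolding y_def by (simp add: mult_left_mono mult_right_mono)
  also have "\<dots> = \<epsilon> * K * (exp (K * (t - \<epsilon>)) * exp (K * \<epsilon>)) * norm x"
    by (simp add: algebra_simps)
  also have "exp (K * (t - \<epsilon>)) * exp (K * \<epsilon>) = exp (K * t)"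
    by (simp add: mult_exp_exp algebra_simps)
  finally show ?thesis using a y_def by simp
qed

end

context csg
begin

lemma G_fix:
  assumes lim: "((\<lambda>h. (G h v - v) /\<^sub>R h) \<longlongrightarrow> w) (at_right 0)"
    and fw: "\<And>t. t \<ge> 0 \<Longrightarrow> G t w = w" and t: "t \<ge> 0"
  shows "G t v = v + t *\<^sub>R w"
proof -
  have "norm (G t v - v - t *\<^sub>R w) \<le> t * e" if e: "e > 0" for e
  proof (cases "t = 0")
    case True then show ?thesis using G0 by simp
  next
    case False
    then have tp: "t > 0" using t by simp
    have "\<forall>\<^sub>F h in at_right 0. dist ((G h v - v) /\<^sub>R h) w < e" using tendstoD[OF lim e] .
    then obtain d where d: "d > 0" and dd: "\<And>h. 0 < h \<Longrightarrow> h < d \<Longrightarrow> dist ((G h v - v) /\<^sub>R h) w < e"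
      unfolding eventually_at_right_field by auto
    obtain n :: nat where n: "n > t / d" using reals_Archimedean2 by blast
    have npos: "n > 0" using n tp d by (metis divide_pos_pos gr0I of_nat_0 order_less_asym)
    define h where "h = t / n"
    have hpos: "h > 0" unfolding h_def using tp npos by simp
    have hd: "h < d" unfolding h_def using n d npos by (simp add: divide_less_eq mult.commute pos_divide_less_eq)
    have hb: "norm (G h v - v - h *\<^sub>R w) \<le> h * e"
    proof -
      have "norm ((G h v - v) /\<^sub>R h - w) < e" using dd[OF hpos hd] by (simp add: dist_norm)
      moreover have "G h v - v - h *\<^sub>R w = h *\<^sub>R ((G h v - v) /\<^sub>R h - w)"
        using hpos by (simp add: algebra_simps)
      ultimately show ?thesis using hpos by (simp add: less_imp_le)
    qed
    have tel: "G t v - v - t *\<^sub>R w = (\<Sum>k<n. G (k * h) (G h v - v - h *\<^sub>R w))"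
    proof -
      have "(\<Sum>k<n. G (k * h) (G h v - v - h *\<^sub>R w)) = (\<Sum>k<n. (G (Suc k * h) v - G (k * h) v) - h *\<^sub>R w)"
      proof (rule sum.cong)
        fix k assume "k \<in> {..<n}"
        have kh: "k * h \<ge> 0" using hpos by simp
        have "G (k * h) (G h v - v - h *\<^sub>R w) = G (k * h) (G h v) - G (k * h) v - h *\<^sub>R G (k * h) w"
          using G_diff[OF kh] G_scale[OF kh] by simp
        also have "G (k * h) (G h v) = G (Suc k * h) v"
          using Gadd[OF kh, of h v] hpos by (simp add: algebra_simps)
        also have "G (k * h) w = w" using fw kh by simp
        finally show "G (k * h) (G h v - v - h *\<^sub>R w) = (G (Suc k * h) v - G (k * h) v) - h *\<^sub>R w" by simp
      qed simp
      also have "\<dots> = (\<Sum>k<n. G (Suc k * h) v - G (k * h) v) - n *\<^sub>R (h *\<^sub>R w)"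
        by (simp add: sum_subtractf sum_constant_scaleR)
      also have "(\<Sum>k<n. G (Suc k * h) v - G (k * h) v) = G (n * h) v - G (0 * h) v"
        using sum_lessThan_telescope[where f="\<lambda>k. G (real k * h) v" and m=n] by simp
      also have "n * h = t" unfolding h_def using npos by simp
      also have "n *\<^sub>R (h *\<^sub>R w) = t *\<^sub>R w" unfolding h_def using npos by simp
      finally show ?thesis using G0 by simp
    qed
    have "norm (G t v - v - t *\<^sub>R w) \<le> (\<Sum>k<n. norm (G (k * h) (G h v - v - h *\<^sub>R w)))"
      unfolding tel by (rule norm_sum)
    also have "\<dots> \<le> (\<Sum>k<n. h * e)"
    proof (rule sum_mono)
      fix k assume "k \<in> {..<n}"
      have kh: "k * h \<ge> 0" using hpos by simp
      show "norm (G (k * h) (G h v - v - h *\<^sub>R w)) \<le> h * e" using contr[OF kh] hb order_trans by blast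
    qed
    also have "\<dots> = t * e" unfolding h_def using npos by simp
    finally show ?thesis .
  qed
  then have "norm (G t v - v - t *\<^sub>R w) \<le> 0"
  proof (cases "t = 0")
    case True then show ?thesis using G0 by simp
  next
    case False
    then have tp: "t > 0" using t by simp
    show ?thesis
    proof (rule field_le_epsilon)
      fix e :: real assume e: "e > 0"
      show "norm (G t v - v - t *\<^sub>R w) \<le> 0 + e"
        using \<open>\<And>e. e > 0 \<Longrightarrow> norm (G t v - v - t *\<^sub>R w) \<le> t * e\<close>[of "e / t"] tp e by simp
    qed
  qed
  then have "G t v - v = t *\<^sub>R w" by simp
  then show ?thesis by (simp add: algebra_simps)
qed

end


locale heatk =
  fixes \<sigma> :: real
  assumes \<sigma>pos: "\<sigma> > 0"
begin

definition sd :: "real \<Rightarrow> real" where "sd t = sqrt (2 * \<sigma> * t)"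

definition gk :: "real \<Rightarrow> real \<Rightarrow> real" where
  "gk t y = normal_density 0 (sd t) y"

definition hf :: "real \<Rightarrow> (real \<Rightarrow> real) \<Rightarrow> real \<Rightarrow> real" where
  "hf t f \<theta> = (if t \<le> 0 then f \<theta> else \<integral>y. gk t y * f (\<theta> - y) \<partial>lborel)"

lemma sd_pos: "t > 0 \<Longrightarrow> sd t > 0"
  unfolding sd_def using \<sigma>pos by simp

lemma sd_sq: "t > 0 \<Longrightarrow> (sd t)\<^sup>2 = 2 * \<sigma> * t"
  unfolding sd_def using \<sigma>pos by simp

lemma gk_nonneg: "gk t y \<ge> 0"
  by (simp add: gk_def)

lemma gk_pos: "t > 0 \<Longrightarrow> gk t y > 0"
  by (simp add: gk_def normal_density_pos sd_pos)

lemma gk_int: "t > 0 \<Longrightarrow> integrable lborel (gk t)"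
  unfolding gk_def[abs_def] using integrable_normal_density[OF sd_pos] by simp

lemma gk_int1: "t > 0 \<Longrightarrow> (\<integral>y. gk t y \<partial>lborel) = 1"
  unfolding gk_def using integral_normal_density[OF sd_pos] by simp

lemma gk_meas[measurable]: "gk t \<in> borel_measurable borel"
  unfolding gk_def[abs_def] by simp

lemma gk_cont: assumes t: "t > 0" shows "continuous_on UNIV (gk t)"
proof -
  have "sd t \<noteq> 0" using sd_pos[OF t] by simp
  then show ?thesis unfolding gk_def[abs_def] normal_density_def by (auto intro!: continuous_intros)
qed

lemma gk_moment2: "t > 0 \<Longrightarrow> (\<integral>y. gk t y * y\<^sup>2 \<partial>lborel) = 2 * \<sigma> * t"
proof -
  assume t: "t > 0"
  have "(\<integral>y. normal_density 0 (sd t) y * (y - 0) ^ (2 * 1) \<partial>lborel) = fact (2 * 1) / ((2 / (sd t)\<^sup>2) ^ 1 * fact 1)"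
    by (rule integral_normal_moment_even) (rule sd_pos[OF t])
  then show ?thesis using sd_sq[OF t] sd_pos[OF t] by (simp add: gk_def power2_eq_square)
qed

lemma gk_moment2_int: "t > 0 \<Longrightarrow> integrable lborel (\<lambda>y. gk t y * y\<^sup>2)"
  using integrable_normal_moment[OF sd_pos, of t 0 2] unfolding gk_def by simp

lemma cont_meas:
  fixes f :: "real \<Rightarrow> real"
  assumes "continuous_on UNIV f" shows "(\<lambda>y. f (\<theta> - y)) \<in> borel_measurable borel"
proof -
  have "(\<lambda>y::real. \<theta> - y) \<in> borel_measurable borel" by simp
  then show ?thesis by (rule borel_measurable_continuous_on[OF assms])
qed

lemma int_gkf:
  assumes f: "continuous_on UNIV f" and B: "\<And>x. \<bar>f x\<bar> \<le> B" and t: "t > 0"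
  shows "integrable lborel (\<lambda>y. gk t y * f (\<theta> - y))"
proof (rule Bochner_Integration.integrable_bound[where f="\<lambda>y. B * gk t y"])
  show "integrable lborel (\<lambda>y. B * gk t y)" using gk_int[OF t] by simp
  have "(\<lambda>y. gk t y * f (\<theta> - y)) \<in> borel_measurable borel"
    using cont_meas[OF f] gk_meas by (rule borel_measurable_times[rotated])
  then show "(\<lambda>y. gk t y * f (\<theta> - y)) \<in> borel_measurable lborel" by simp
  show "AE y in lborel. norm (gk t y * f (\<theta> - y)) \<le> norm (B * gk t y)"
  proof (rule AE_I2)
    fix y
    have "norm (gk t y * f (\<theta> - y)) = gk t y * \<bar>f (\<theta> - y)\<bar>" using gk_nonneg by (simp add: abs_mult)
    also have "\<dots> \<le> gk t y * B" using B gk_nonneg by (intro mult_left_mono) auto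
    also have "\<dots> \<le> norm (B * gk t y)" using abs_ge_self[of "B * gk t y"] by (simp add: mult.commute)
    finally show "norm (gk t y * f (\<theta> - y)) \<le> norm (B * gk t y)" .
  qed
qed

lemma hf_bound:
  assumes f: "continuous_on UNIV f" and B: "\<And>x. \<bar>f x\<bar> \<le> B"
  shows "\<bar>hf t f \<theta>\<bar> \<le> B"
proof (cases "t \<le> 0")
  case True then show ?thesis using B by (simp add: hf_def)
next
  case False
  then have t: "t > 0" by simp
  have "\<bar>\<integral>y. gk t y * f (\<theta> - y) \<partial>lborel\<bar> \<le> (\<integral>y. B * gk t y \<partial>lborel)"
  proof (rule integral_abs_bound_integral)
    show "integrable lborel (\<lambda>y. gk t y * f (\<theta> - y))" by (rule int_gkf[OF f B t])
    show "integrable lborel (\<lambda>y. B * gk t y)" using gk_int[OF t] by simp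
    fix y
    have "gk t y * \<bar>f (\<theta> - y)\<bar> \<le> gk t y * B" using B[of "\<theta> - y"] gk_nonneg[of t y] by (rule mult_left_mono)
    then show "\<bar>gk t y * f (\<theta> - y)\<bar> \<le> B * gk t y"
      using gk_nonneg[of t y] by (simp add: abs_mult mult.commute)
  qed
  also have "\<dots> = B" using gk_int1[OF t] by simp
  finally show ?thesis using t by (simp add: hf_def)
qed

lemma hf_lin:
  assumes f: "continuous_on UNIV f" and Bf: "\<And>x. \<bar>f x\<bar> \<le> Bf"
    and g: "continuous_on UNIV g" and Bg: "\<And>x. \<bar>g x\<bar> \<le> Bg"
  shows "hf t (\<lambda>x. a * f x + b * g x) \<theta> = a * hf t f \<theta> + b * hf t g \<theta>"
proof (cases "t \<le> 0")
  case True then show ?thesis by (simp add: hf_def)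
next
  case False
  have "(\<integral>y. gk t y * (a * f (\<theta> - y) + b * g (\<theta> - y)) \<partial>lborel)
      = (\<integral>y. a * (gk t y * f (\<theta> - y)) + b * (gk t y * g (\<theta> - y)) \<partial>lborel)"
    by (simp add: algebra_simps)
  also have "\<dots> = a * (\<integral>y. gk t y * f (\<theta> - y) \<partial>lborel) + b * (\<integral>y. gk t y * g (\<theta> - y) \<partial>lborel)"
    using int_gkf[OF f Bf] int_gkf[OF g Bg] False by simp
  finally show ?thesis using False by (simp add: hf_def)
qed

lemma hf_const: "hf t (\<lambda>x. c) \<theta> = c"
  by (cases "t \<le> 0") (auto simp: hf_def gk_int1)

lemma hf_mod:
  assumes f: "continuous_on UNIV f" and B: "\<And>x. \<bar>f x\<bar> \<le> B"
    and eta: "\<And>y. \<bar>f (\<theta> - y) - f (\<theta>' - y)\<bar> \<le> \<eta>"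
  shows "\<bar>hf t f \<theta> - hf t f \<theta>'\<bar> \<le> \<eta>"
proof (cases "t \<le> 0")
  case True then show ?thesis using eta[of 0] by (simp add: hf_def)
next
  case False
  then have t: "t > 0" by simp
  have "hf t f \<theta> - hf t f \<theta>' = (\<integral>y. gk t y * (f (\<theta> - y) - f (\<theta>' - y)) \<partial>lborel)"
    using t int_gkf[OF f B t, of \<theta>] int_gkf[OF f B t, of \<theta>'] by (simp add: hf_def algebra_simps)
  also have "\<bar>\<dots>\<bar> \<le> (\<integral>y. \<eta> * gk t y \<partial>lborel)"
  proof (rule integral_abs_bound_integral)
    show "integrable lborel (\<lambda>y. gk t y * (f (\<theta> - y) - f (\<theta>' - y)))"
      using int_gkf[OF f B t, of \<theta>] int_gkf[OF f B t, of \<theta>'] by (simp add: algebra_simps)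
    show "integrable lborel (\<lambda>y. \<eta> * gk t y)" using gk_int[OF t] by simp
    fix y
    have "gk t y * \<bar>f (\<theta> - y) - f (\<theta>' - y)\<bar> \<le> gk t y * \<eta>" using eta[of y] gk_nonneg[of t y] by (rule mult_left_mono)
    then show "\<bar>gk t y * (f (\<theta> - y) - f (\<theta>' - y))\<bar> \<le> \<eta> * gk t y"
      using gk_nonneg[of t y] by (simp add: abs_mult mult.commute)
  qed
  also have "\<dots> = \<eta>" using gk_int1[OF t] by simp
  finally show ?thesis .
qed

lemma hf_strong:
  assumes f: "continuous_on UNIV f" and B: "\<And>x. \<bar>f x\<bar> \<le> B"
    and d: "\<delta> > 0" and eta: "\<And>a b. \<bar>a - b\<bar> < \<delta> \<Longrightarrow> \<bar>f a - f b\<bar> \<le> \<eta>" and t: "t > 0"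
  shows "\<bar>hf t f \<theta> - f \<theta>\<bar> \<le> \<eta> + 2 * B * (2 * \<sigma> * t) / \<delta>\<^sup>2"
proof -
  have eta0: "\<eta> \<ge> 0" using eta[of 0 0] d by simp
  have "hf t f \<theta> - f \<theta> = (\<integral>y. gk t y * (f (\<theta> - y) - f \<theta>) \<partial>lborel)"
    using t int_gkf[OF f B t, of \<theta>] gk_int[OF t] gk_int1[OF t] by (simp add: hf_def algebra_simps)
  also have "\<bar>\<dots>\<bar> \<le> (\<integral>y. \<eta> * gk t y + (2 * B / \<delta>\<^sup>2) * (gk t y * y\<^sup>2) \<partial>lborel)"
  proof (rule integral_abs_bound_integral)
    show "integrable lborel (\<lambda>y. gk t y * (f (\<theta> - y) - f \<theta>))"
      using int_gkf[OF f B t, of \<theta>] gk_int[OF t] by (simp add: algebra_simps)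
    show "integrable lborel (\<lambda>y. \<eta> * gk t y + (2 * B / \<delta>\<^sup>2) * (gk t y * y\<^sup>2))"
      using gk_int[OF t] gk_moment2_int[OF t] by simp
    fix y
    have "\<bar>f (\<theta> - y) - f \<theta>\<bar> \<le> \<eta> + (2 * B / \<delta>\<^sup>2) * y\<^sup>2"
    proof (cases "\<bar>y\<bar> < \<delta>")
      case True
      then have "\<bar>f (\<theta> - y) - f \<theta>\<bar> \<le> \<eta>" by (intro eta) auto
      moreover have "0 \<le> (2 * B / \<delta>\<^sup>2) * y\<^sup>2" using B[of 0] by simp
      ultimately show ?thesis by linarith
    next
      case False
      then have "\<delta>\<^sup>2 \<le> y\<^sup>2" using d by (metis abs_ge_zero abs_of_pos not_less power2_abs power_mono)
      then have "1 \<le> y\<^sup>2 / \<delta>\<^sup>2" using d by simp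
      have "\<bar>f (\<theta> - y) - f \<theta>\<bar> \<le> 2 * B" using B[of "\<theta> - y"] B[of \<theta>] by linarith
      also have "\<dots> \<le> 2 * B * (y\<^sup>2 / \<delta>\<^sup>2)"
      proof -
        have B0: "0 \<le> 2 * B" using B[of 0] by simp
        show ?thesis using mult_left_mono[OF \<open>1 \<le> y\<^sup>2 / \<delta>\<^sup>2\<close> B0] by simp
      qed
      finally show ?thesis using eta0 by simp
    qed
    then have "gk t y * \<bar>f (\<theta> - y) - f \<theta>\<bar> \<le> gk t y * (\<eta> + (2 * B / \<delta>\<^sup>2) * y\<^sup>2)"
      using gk_nonneg by (intro mult_left_mono) auto
    moreover have "\<bar>gk t y * (f (\<theta> - y) - f \<theta>)\<bar> = gk t y * \<bar>f (\<theta> - y) - f \<theta>\<bar>"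
      using gk_nonneg[of t y] by (simp add: abs_mult)
    moreover have "gk t y * (\<eta> + (2 * B / \<delta>\<^sup>2) * y\<^sup>2) = \<eta> * gk t y + (2 * B / \<delta>\<^sup>2) * (gk t y * y\<^sup>2)"
      by (simp add: algebra_simps)
    ultimately show "\<bar>gk t y * (f (\<theta> - y) - f \<theta>)\<bar> \<le> \<eta> * gk t y + (2 * B / \<delta>\<^sup>2) * (gk t y * y\<^sup>2)"
      by simp
  qed
  also have "\<dots> = \<eta> + 2 * B * (2 * \<sigma> * t) / \<delta>\<^sup>2"
    using gk_int[OF t] gk_moment2_int[OF t] gk_int1[OF t] gk_moment2[OF t] by simp
  finally show ?thesis .
qed

end


context heatk
begin

lemma hf_CS1:
  assumes f: "f \<in> CS1"
  shows "hf t f \<in> CS1"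
proof -
  have fc: "continuous_on UNIV f" using f by (simp add: CS1_def)
  obtain B where B: "\<And>x. \<bar>f x\<bar> \<le> B" using supn_ge[OF f] by blast
  have "continuous_on UNIV (hf t f)"
    unfolding continuous_on_iff
  proof (intro ballI allI impI)
    fix \<theta>0 e :: real assume e: "e > 0"
    obtain d where d: "d > 0" and dd: "\<And>a b. \<bar>a - b\<bar> < d \<Longrightarrow> \<bar>f a - f b\<bar> < e / 2"
      using CS1_unif_cont[OF f, of "e / 2"] e by auto
    show "\<exists>d>0. \<forall>\<theta>\<in>UNIV. dist \<theta> \<theta>0 < d \<longrightarrow> dist (hf t f \<theta>) (hf t f \<theta>0) < e"
    proof (intro exI[of _ d] conjI ballI impI)
      fix \<theta> assume "dist \<theta> \<theta>0 < d"
      then have "\<bar>hf t f \<theta> - hf t f \<theta>0\<bar> \<le> e / 2"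
        by (intro hf_mod[OF fc B]) (use dd in \<open>auto simp: dist_real_def less_imp_le\<close>)
      then show "dist (hf t f \<theta>) (hf t f \<theta>0) < e" using e by (simp add: dist_real_def)
    qed (use d in auto)
  qed
  moreover have "hf t f (\<theta> + 2 * pi) = hf t f \<theta>" for \<theta>
  proof -
    have "f (\<theta> + 2 * pi - y) = f (\<theta> - y)" for y using CS1_per[OF f, of "\<theta> - y"] by (simp add: algebra_simps)
    then show ?thesis using CS1_per[OF f, of \<theta>] by (simp add: hf_def)
  qed
  ultimately show ?thesis by (simp add: CS1_def)
qed

lemma CS1_bound: "f \<in> CS1 \<Longrightarrow> \<exists>B. \<forall>x. \<bar>f x\<bar> \<le> B"
  using supn_ge by blast

lemma CS1_meas: "f \<in> CS1 \<Longrightarrow> f \<in> borel_measurable borel"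
  by (rule borel_measurable_continuous_onI) (simp add: CS1_def)

lemma hf_nn:
  assumes f: "f \<in> CS1" and nn: "\<And>x. f x \<ge> 0" and t: "t > 0"
  shows "(\<integral>\<^sup>+y. ennreal (gk t y * f (\<theta> - y)) \<partial>lborel) = ennreal (hf t f \<theta>)"
proof -
  obtain B where B: "\<And>x. \<bar>f x\<bar> \<le> B" using CS1_bound[OF f] by blast
  have fc: "continuous_on UNIV f" using f by (simp add: CS1_def)
  show ?thesis unfolding hf_def using t
    by (simp add: nn_integral_eq_integral[OF int_gkf[OF fc B t]] gk_nonneg nn)
qed

lemma sd_add: "t > 0 \<Longrightarrow> s > 0 \<Longrightarrow> sqrt ((sd s)\<^sup>2 + (sd t)\<^sup>2) = sd (t + s)"
  using sd_sq[of s] sd_sq[of t] by (simp add: sd_def algebra_simps)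

lemma hf_semigroup_nn:
  assumes f: "f \<in> CS1" and nn: "\<And>x. f x \<ge> 0" and t: "t > 0" and s: "s > 0"
  shows "hf t (hf s f) \<theta> = hf (t + s) f \<theta>"
proof -
  have fm[measurable]: "f \<in> borel_measurable borel" by (rule CS1_meas[OF f])
  have hsf: "hf s f \<in> CS1" by (rule hf_CS1[OF f])
  obtain B where B: "\<And>x. \<bar>f x\<bar> \<le> B" using CS1_bound[OF f] by blast
  have fc: "continuous_on UNIV f" using f by (simp add: CS1_def)
  have hnn: "hf s f x \<ge> 0" for x
  proof -
    have "hf s f x = (\<integral>y. gk s y * f (x - y) \<partial>lborel)" using s by (simp add: hf_def)
    also have "\<dots> \<ge> 0" by (intro integral_nonneg_AE AE_I2 mult_nonneg_nonneg gk_nonneg nn)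
    finally show ?thesis .
  qed
  have "ennreal (hf t (hf s f) \<theta>) = (\<integral>\<^sup>+y. ennreal (gk t y * hf s f (\<theta> - y)) \<partial>lborel)"
    by (rule hf_nn[OF hsf hnn t, symmetric])
  also have "\<dots> = (\<integral>\<^sup>+y. ennreal (gk t y) * (\<integral>\<^sup>+z. ennreal (gk s z * f (\<theta> - y - z)) \<partial>lborel) \<partial>lborel)"
  proof (rule nn_integral_cong)
    fix y
    have "ennreal (gk t y * hf s f (\<theta> - y)) = ennreal (gk t y) * ennreal (hf s f (\<theta> - y))"
      by (rule ennreal_mult'[OF gk_nonneg])
    also have "ennreal (hf s f (\<theta> - y)) = (\<integral>\<^sup>+z. ennreal (gk s z * f (\<theta> - y - z)) \<partial>lborel)"
      by (rule hf_nn[OF f nn s, symmetric])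
    finally show "ennreal (gk t y * hf s f (\<theta> - y)) = ennreal (gk t y) * (\<integral>\<^sup>+z. ennreal (gk s z * f (\<theta> - y - z)) \<partial>lborel)" .
  qed
  also have "\<dots> = (\<integral>\<^sup>+y. (\<integral>\<^sup>+w. ennreal (gk t y) * ennreal (gk s (w - y)) * ennreal (f (\<theta> - w)) \<partial>lborel) \<partial>lborel)"
  proof (rule nn_integral_cong)
    fix y
    have m: "(\<lambda>z. ennreal (gk s z * f (\<theta> - y - z))) \<in> borel_measurable borel" by measurable
    have "(\<integral>\<^sup>+z. ennreal (gk s z * f (\<theta> - y - z)) \<partial>lborel)
        = (\<integral>\<^sup>+w. ennreal (gk s (- y + 1 * w) * f (\<theta> - y - (- y + 1 * w))) \<partial>lborel)"
      using nn_integral_real_affine[OF m, of 1 "- y"] by simp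
    also have "\<dots> = (\<integral>\<^sup>+w. ennreal (gk s (w - y)) * ennreal (f (\<theta> - w)) \<partial>lborel)"
      by (rule nn_integral_cong) (simp add: ennreal_mult' gk_nonneg)
    finally have "ennreal (gk t y) * (\<integral>\<^sup>+z. ennreal (gk s z * f (\<theta> - y - z)) \<partial>lborel)
        = ennreal (gk t y) * (\<integral>\<^sup>+w. ennreal (gk s (w - y)) * ennreal (f (\<theta> - w)) \<partial>lborel)" by simp
    also have "\<dots> = (\<integral>\<^sup>+w. ennreal (gk t y) * (ennreal (gk s (w - y)) * ennreal (f (\<theta> - w))) \<partial>lborel)"
      by (rule nn_integral_cmult[symmetric]) measurable
    finally show "ennreal (gk t y) * (\<integral>\<^sup>+z. ennreal (gk s z * f (\<theta> - y - z)) \<partial>lborel)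
        = (\<integral>\<^sup>+w. ennreal (gk t y) * ennreal (gk s (w - y)) * ennreal (f (\<theta> - w)) \<partial>lborel)"
      by (simp add: mult.assoc)
  qed
  also have "\<dots> = (\<integral>\<^sup>+w. (\<integral>\<^sup>+y. ennreal (gk t y) * ennreal (gk s (w - y)) * ennreal (f (\<theta> - w)) \<partial>lborel) \<partial>lborel)"
    by (rule lborel_pair.Fubini') measurable
  also have "\<dots> = (\<integral>\<^sup>+w. ennreal (f (\<theta> - w)) * (\<integral>\<^sup>+y. ennreal (normal_density 0 (sd s) (w - y) * normal_density 0 (sd t) y) \<partial>lborel) \<partial>lborel)"
  proof (rule nn_integral_cong)
    fix w
    have "(\<integral>\<^sup>+y. ennreal (gk t y) * ennreal (gk s (w - y)) * ennreal (f (\<theta> - w)) \<partial>lborel)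
        = (\<integral>\<^sup>+y. ennreal (f (\<theta> - w)) * ennreal (normal_density 0 (sd s) (w - y) * normal_density 0 (sd t) y) \<partial>lborel)"
      by (rule nn_integral_cong) (simp add: gk_def ennreal_mult' mult_ac)
    also have "\<dots> = ennreal (f (\<theta> - w)) * (\<integral>\<^sup>+y. ennreal (normal_density 0 (sd s) (w - y) * normal_density 0 (sd t) y) \<partial>lborel)"
      by (rule nn_integral_cmult) measurable
    finally show "(\<integral>\<^sup>+y. ennreal (gk t y) * ennreal (gk s (w - y)) * ennreal (f (\<theta> - w)) \<partial>lborel)
        = ennreal (f (\<theta> - w)) * (\<integral>\<^sup>+y. ennreal (normal_density 0 (sd s) (w - y) * normal_density 0 (sd t) y) \<partial>lborel)" .
  qed
  also have "\<dots> = (\<integral>\<^sup>+w. ennreal (f (\<theta> - w)) * ennreal (gk (t + s) w) \<partial>lborel)"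
  proof -
    have "(\<lambda>x. \<integral>\<^sup>+y. ennreal (normal_density 0 (sd s) (x - y) * normal_density 0 (sd t) y) \<partial>lborel)
        = normal_density 0 (sqrt ((sd s)\<^sup>2 + (sd t)\<^sup>2))"
      by (rule conv_normal_density_zero_mean) (use sd_pos s t in auto)
    then have "\<And>w. (\<integral>\<^sup>+y. ennreal (normal_density 0 (sd s) (w - y) * normal_density 0 (sd t) y) \<partial>lborel)
        = ennreal (gk (t + s) w)"
      using sd_add[OF t s] by (simp add: gk_def fun_eq_iff)
    then show ?thesis by simp
  qed
  also have "\<dots> = (\<integral>\<^sup>+w. ennreal (gk (t + s) w * f (\<theta> - w)) \<partial>lborel)"
    by (rule nn_integral_cong) (simp add: ennreal_mult' gk_nonneg nn mult.commute)
  also have "\<dots> = ennreal (hf (t + s) f \<theta>)"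
    by (rule hf_nn[OF f nn]) (use t s in simp)
  finally have "ennreal (hf t (hf s f) \<theta>) = ennreal (hf (t + s) f \<theta>)" .
  moreover have "hf t (hf s f) \<theta> \<ge> 0"
    using t by (subst hf_def) (simp add: integral_nonneg_AE gk_nonneg hnn)
  moreover have "hf (t + s) f \<theta> \<ge> 0"
    using t s by (simp add: hf_def integral_nonneg_AE gk_nonneg nn)
  ultimately show ?thesis by simp
qed

end


context heatk
begin

lemma hf_add_const:
  assumes f: "f \<in> CS1"
  shows "hf t (\<lambda>x. f x + c) \<theta> = hf t f \<theta> + c"
proof (cases "t \<le> 0")
  case True then show ?thesis by (simp add: hf_def)
next
  case False
  then have t: "t > 0" by simp
  obtain B where B: "\<And>x. \<bar>f x\<bar> \<le> B" using CS1_bound[OF f] by blast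
  have fc: "continuous_on UNIV f" using f by (simp add: CS1_def)
  have "(\<integral>y. gk t y * (f (\<theta> - y) + c) \<partial>lborel) = (\<integral>y. gk t y * f (\<theta> - y) + c * gk t y \<partial>lborel)"
    by (simp add: algebra_simps)
  also have "\<dots> = (\<integral>y. gk t y * f (\<theta> - y) \<partial>lborel) + c"
    using int_gkf[OF fc B t] gk_int[OF t] gk_int1[OF t] by simp
  finally show ?thesis using t by (simp add: hf_def)
qed

lemma hf_semigroup:
  assumes f: "f \<in> CS1" and t: "t \<ge> 0" and s: "s \<ge> 0"
  shows "hf t (hf s f) \<theta> = hf (t + s) f \<theta>"
proof (cases "t = 0 \<or> s = 0")
  case True
  then show ?thesis
  proof
    assume "t = 0" then show ?thesis by (simp add: hf_def)
  next
    assume s0: "s = 0"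
    have "hf s f = f" using s0 by (simp add: hf_def[abs_def])
    then show ?thesis using s0 by simp
  qed
next
  case False
  then have t': "t > 0" and s': "s > 0" using t s by auto
  obtain B where B: "\<And>x. \<bar>f x\<bar> \<le> B" using CS1_bound[OF f] by blast
  define g where "g = (\<lambda>x. f x + B)"
  have g: "g \<in> CS1" unfolding g_def using f by (auto simp: CS1_def intro!: continuous_intros)
  have gnn: "g x \<ge> 0" for x unfolding g_def using B[of x] by linarith
  have fg: "f = (\<lambda>x. g x + (- B))" unfolding g_def by simp
  have hs: "hf s f = (\<lambda>x. hf s g x + (- B))" unfolding fg by (rule ext) (rule hf_add_const[OF g])
  have "hf t (hf s f) \<theta> = hf t (hf s g) \<theta> + (- B)"
    unfolding hs by (rule hf_add_const[OF hf_CS1[OF g]])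
  also have "hf t (hf s g) \<theta> = hf (t + s) g \<theta>" by (rule hf_semigroup_nn[OF g gnn t' s'])
  also have "hf (t + s) g \<theta> + (- B) = hf (t + s) f \<theta>"
    unfolding fg by (rule hf_add_const[OF g, symmetric])
  finally show ?thesis .
qed

lemma hf_strong_unif:
  assumes f: "f \<in> CS1" and e: "e > 0"
  shows "\<exists>d>0. \<forall>h. 0 < h \<and> h < d \<longrightarrow> (\<forall>\<theta>. \<bar>hf h f \<theta> - f \<theta>\<bar> \<le> e)"
proof -
  obtain B where B: "\<And>x. \<bar>f x\<bar> \<le> B" using CS1_bound[OF f] by blast
  have B0: "B \<ge> 0" using B[of 0] by simp
  have fc: "continuous_on UNIV f" using f by (simp add: CS1_def)
  obtain \<delta> where d: "\<delta> > 0" and dd: "\<And>a b. \<bar>a - b\<bar> < \<delta> \<Longrightarrow> \<bar>f a - f b\<bar> < e / 2"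
    using CS1_unif_cont[OF f, of "e / 2"] e by auto
  define d where "d = e / 2 * \<delta>\<^sup>2 / (4 * \<sigma> * (B + 1))"
  have dpos: "d > 0" unfolding d_def using e d \<sigma>pos B0 by simp
  show ?thesis
  proof (intro exI[of _ d] conjI allI impI)
    show "d > 0" by (rule dpos)
    fix h \<theta> assume h: "0 < h \<and> h < d"
    have "\<bar>hf h f \<theta> - f \<theta>\<bar> \<le> e / 2 + 2 * B * (2 * \<sigma> * h) / \<delta>\<^sup>2"
      by (rule hf_strong[OF fc B d]) (use dd h in \<open>auto simp: less_imp_le\<close>)
    also have "2 * B * (2 * \<sigma> * h) / \<delta>\<^sup>2 \<le> e / 2"
    proof -
      have "2 * B * (2 * \<sigma> * h) \<le> 2 * (B + 1) * (2 * \<sigma> * d)"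
        using h B0 \<sigma>pos by (intro mult_mono) auto
      also have "\<dots> = d * (4 * \<sigma> * (B + 1))" by (simp add: algebra_simps)
      also have "\<dots> = e / 2 * \<delta>\<^sup>2"
      proof -
        have nz: "4 * \<sigma> * (B + 1) \<noteq> 0" using B0 \<sigma>pos by simp
        show ?thesis using nonzero_eq_divide_eq[OF nz] d_def by blast
      qed
      finally show ?thesis using d by (simp add: divide_le_eq)
    qed
    finally show "\<bar>hf h f \<theta> - f \<theta>\<bar> \<le> e" by simp
  qed
qed

lemma pos_integral_pos:
  fixes \<phi> :: "real \<Rightarrow> real"
  assumes c: "continuous_on UNIV \<phi>" and nn: "\<And>y. \<phi> y \<ge> 0" and int: "integrable lborel \<phi>"
    and pos: "\<phi> y1 > 0"
  shows "(\<integral>y. \<phi> y \<partial>lborel) > 0"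
proof -
  define c where "c = \<phi> y1 / 2"
  have cpos: "c > 0" unfolding c_def using pos by simp
  obtain \<delta> where d: "\<delta> > 0" and dd: "\<And>y. dist y y1 < \<delta> \<Longrightarrow> dist (\<phi> y) (\<phi> y1) < c"
    using c cpos unfolding continuous_on_iff by (metis UNIV_I)
  have "c * indicator {y1 - \<delta>/2 .. y1 + \<delta>/2} y \<le> \<phi> y" for y
  proof (cases "y \<in> {y1 - \<delta>/2 .. y1 + \<delta>/2}")
    case True
    then have "dist y y1 < \<delta>" using d by (auto simp: dist_real_def)
    then have "dist (\<phi> y) (\<phi> y1) < c" by (rule dd)
    then have "\<phi> y1 - c < \<phi> y" by (auto simp: dist_real_def abs_less_iff)
    then show ?thesis using True unfolding c_def by simp
  next
    case False then show ?thesis using nn by simp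
  qed
  then have "(\<integral>y. c * indicator {y1 - \<delta>/2 .. y1 + \<delta>/2} y \<partial>lborel) \<le> (\<integral>y. \<phi> y \<partial>lborel)"
    by (intro integral_mono int) (use d in \<open>auto intro!: integrable_mult_right integrable_real_indicator\<close>)
  moreover have "(\<integral>y. c * indicator {y1 - \<delta>/2 .. y1 + \<delta>/2} y \<partial>lborel) = c * \<delta>"
    using d by simp
  moreover have "c * \<delta> > 0" using cpos d by simp
  ultimately show ?thesis by linarith
qed

lemma hf_max_principle:
  assumes v: "v \<in> CS1" and t: "t > 0" and hfix: "\<And>\<theta>. hf t v \<theta> = v \<theta>"
  shows "\<exists>c. \<forall>\<theta>. v \<theta> = c"
proof -
  have vc: "continuous_on UNIV v" using v by (simp add: CS1_def)
  obtain B where B: "\<And>x. \<bar>v x\<bar> \<le> B" using CS1_bound[OF v] by blast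
  obtain \<theta>0 where t0: "\<theta>0 \<in> {0..2*pi}" and mx: "\<And>\<theta>. \<theta> \<in> {0..2*pi} \<Longrightarrow> v \<theta> \<le> v \<theta>0"
    using continuous_attains_sup[of "{0..2*pi}" v] vc continuous_on_subset by (metis atLeastAtMost_iff compact_Icc empty_iff order.refl pi_ge_zero zero_le_mult_iff zero_le_numeral subset_UNIV)
  have mx': "v \<theta> \<le> v \<theta>0" for \<theta>
    using mx[of "red \<theta>"] red_range[of \<theta>] CS1_red[OF v, of \<theta>] by auto
  define \<phi> where "\<phi> = (\<lambda>y. gk t y * (v \<theta>0 - v (\<theta>0 - y)))"
  have \<phi>nn: "\<phi> y \<ge> 0" for y unfolding \<phi>_def using mx' gk_nonneg by simp
  have \<phi>c: "continuous_on UNIV \<phi>" unfolding \<phi>_def using gk_cont[OF t] vc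
    by (auto intro!: continuous_intros continuous_on_compose2[OF vc])
  have \<phi>i: "integrable lborel \<phi>"
    unfolding \<phi>_def using int_gkf[OF vc B t, of \<theta>0] gk_int[OF t] by (simp add: algebra_simps)
  have "(\<integral>y. \<phi> y \<partial>lborel) = v \<theta>0 - hf t v \<theta>0"
    unfolding \<phi>_def using int_gkf[OF vc B t, of \<theta>0] gk_int[OF t] gk_int1[OF t] t
    by (simp add: algebra_simps hf_def)
  also have "\<dots> = 0" using hfix by simp
  finally have i0: "(\<integral>y. \<phi> y \<partial>lborel) = 0" .
  have vv: "v (\<theta>0 - y) = v \<theta>0" for y
  proof (rule ccontr)
    assume "v (\<theta>0 - y) \<noteq> v \<theta>0"
    then have "v (\<theta>0 - y) < v \<theta>0" using mx'[of "\<theta>0 - y"] by simp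
    then have "\<phi> y > 0" unfolding \<phi>_def using gk_pos[OF t] by simp
    then have "(\<integral>y. \<phi> y \<partial>lborel) > 0" by (rule pos_integral_pos[OF \<phi>c \<phi>nn \<phi>i])
    then show False using i0 by simp
  qed
  then have "v \<theta> = v \<theta>0" for \<theta> using vv[of "\<theta>0 - \<theta>"] by simp
  then show ?thesis by blast
qed

end


lemma deriv_per:
  fixes f :: "real \<Rightarrow> real"
  assumes per: "\<And>\<theta>. f (\<theta> + 2*pi) = f \<theta>" and dif: "\<And>\<theta>. f differentiable at \<theta>"
  shows "deriv f (\<theta> + 2*pi) = deriv f \<theta>"
proof -
  have "DERIV f (\<theta> + 2*pi) :> deriv f (\<theta> + 2*pi)"
    using dif DERIV_deriv_iff_real_differentiable by blast
  then have "DERIV (\<lambda>x. f (x + 2*pi)) \<theta> :> deriv f (\<theta> + 2*pi)"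
    by (simp add: DERIV_shift)
  moreover have "(\<lambda>x. f (x + 2*pi)) = f" using per by auto
  ultimately have "DERIV f \<theta> :> deriv f (\<theta> + 2*pi)" by simp
  then show ?thesis by (rule DERIV_imp_deriv[symmetric])
qed

lemma C2S1_facts:
  assumes f: "f \<in> C2S1"
  shows "f \<in> CS1" "\<And>x. DERIV f x :> deriv f x" "\<And>x. DERIV (deriv f) x :> deriv (deriv f) x"
    "deriv f \<in> CS1" "deriv (deriv f) \<in> CS1"
proof -
  show f1: "f \<in> CS1" using f by (simp add: C2S1_def)
  show d1: "\<And>x. DERIV f x :> deriv f x"
    using f DERIV_deriv_iff_real_differentiable by (auto simp: C2S1_def)
  show d2: "\<And>x. DERIV (deriv f) x :> deriv (deriv f) x"
    using f DERIV_deriv_iff_real_differentiable by (auto simp: C2S1_def)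
  have p1: "deriv f (\<theta> + 2*pi) = deriv f \<theta>" for \<theta>
    by (rule deriv_per) (use f in \<open>auto simp: C2S1_def CS1_def\<close>)
  have p2: "deriv (deriv f) (\<theta> + 2*pi) = deriv (deriv f) \<theta>" for \<theta>
    by (rule deriv_per) (use f p1 in \<open>auto simp: C2S1_def CS1_def\<close>)
  have c1: "continuous_on UNIV (deriv f)"
    using d2 by (meson DERIV_isCont continuous_at_imp_continuous_on)
  show "deriv f \<in> CS1" using c1 p1 by (simp add: CS1_def)
  show "deriv (deriv f) \<in> CS1" using f p2 by (simp add: CS1_def C2S1_def)
qed

lemma taylor2:
  assumes f: "f \<in> C2S1"
  shows "\<exists>\<tau>. \<bar>\<tau>\<bar> \<le> \<bar>y\<bar> \<and> f (\<theta> - y) = f \<theta> - y * deriv f \<theta> + y\<^sup>2 / 2 * deriv (deriv f) (\<theta> + \<tau>)"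
proof -
  define df where "df = (\<lambda>(m::nat) t. if m = 0 then f (\<theta> + t) else if m = 1 then deriv f (\<theta> + t) else deriv (deriv f) (\<theta> + t))"
  have D: "\<forall>m t. m < 2 \<and> \<bar>t\<bar> \<le> \<bar>- y\<bar> \<longrightarrow> DERIV (df m) t :> df (Suc m) t"
  proof (intro allI impI)
    fix m :: nat and t :: real assume m: "m < 2 \<and> \<bar>t\<bar> \<le> \<bar>- y\<bar>"
    then consider "m = 0" | "m = 1" by linarith
    then show "DERIV (df m) t :> df (Suc m) t"
    proof cases
      case 1
      have "DERIV (\<lambda>t. f (\<theta> + t)) t :> deriv f (\<theta> + t)"
        using DERIV_shift[of f "deriv f (\<theta> + t)" t \<theta>] C2S1_facts(2)[OF f, of "t + \<theta>"] by (simp add: add.commute)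
      then show ?thesis using 1 by (simp add: df_def)
    next
      case 2
      have "DERIV (\<lambda>t. deriv f (\<theta> + t)) t :> deriv (deriv f) (\<theta> + t)"
        using DERIV_shift[of "deriv f" "deriv (deriv f) (\<theta> + t)" t \<theta>] C2S1_facts(3)[OF f, of "t + \<theta>"] by (simp add: add.commute)
      then show ?thesis using 2 by (simp add: df_def)
    qed
  qed
  have d0: "df 0 = (\<lambda>t. f (\<theta> + t))" by (simp add: df_def)
  obtain \<tau> where \<tau>: "\<bar>\<tau>\<bar> \<le> \<bar>- y\<bar>"
    and eq: "f (\<theta> + - y) = (\<Sum>m<2. df m 0 / fact m * (- y) ^ m) + df 2 \<tau> / fact 2 * (- y) ^ 2"
    using Maclaurin_bi_le[OF d0 D] by blast
  have "f (\<theta> - y) = f \<theta> - y * deriv f \<theta> + y\<^sup>2 / 2 * deriv (deriv f) (\<theta> + \<tau>)"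
    using eq by (simp add: df_def numeral_2_eq_2 lessThan_Suc)
  then show ?thesis using \<tau> by auto
qed

context heatk
begin

lemma gk_m1_int: "t > 0 \<Longrightarrow> integrable lborel (\<lambda>y. gk t y * y)"
  using integrable_normal_moment[OF sd_pos, of t 0 1] unfolding gk_def by simp

lemma gk_m1: "t > 0 \<Longrightarrow> (\<integral>y. gk t y * y \<partial>lborel) = 0"
  using integral_normal_moment_odd[OF sd_pos, of t 0 0] unfolding gk_def by simp

lemma gk_m3_int: "t > 0 \<Longrightarrow> integrable lborel (\<lambda>y. gk t y * \<bar>y\<bar> ^ 3)"
  using integrable_normal_moment_abs[OF sd_pos, of t 0 3] unfolding gk_def by simp

lemma gk_m3: "t > 0 \<Longrightarrow> (\<integral>y. gk t y * \<bar>y\<bar> ^ 3 \<partial>lborel) \<le> 2 * (sd t) ^ 3"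
proof -
  assume t: "t > 0"
  have "(\<integral>y. gk t y * \<bar>y\<bar> ^ 3 \<partial>lborel) = 2 ^ 1 * sd t ^ (2 * 1 + 1) * fact 1 * sqrt (2 / pi)"
    using integral_normal_moment_abs_odd[OF sd_pos[OF t], of 0 1] unfolding gk_def by simp
  also have "\<dots> \<le> 2 * sd t ^ 3 * 1"
  proof -
    have "sqrt (2 / pi) \<le> 1" using pi_gt3 by simp
    then show ?thesis using sd_pos[OF t] by simp
  qed
  finally show ?thesis by simp
qed

end


context heatk
begin

lemma hf_gen:
  assumes f: "f \<in> C2S1" and e: "e > 0"
  shows "\<exists>d>0. \<forall>h. 0 < h \<and> h < d \<longrightarrow> (\<forall>\<theta>. \<bar>(hf h f \<theta> - f \<theta>) / h - \<sigma> * deriv (deriv f) \<theta>\<bar> \<le> e)"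
proof -
  define f1 where "f1 = deriv f"
  define f2 where "f2 = deriv (deriv f)"
  have fC: "f \<in> CS1" and f2C: "f2 \<in> CS1" using C2S1_facts[OF f] by (auto simp: f2_def)
  have fc: "continuous_on UNIV f" using fC by (simp add: CS1_def)
  obtain B where B: "\<And>x. \<bar>f x\<bar> \<le> B" using CS1_bound[OF fC] by blast
  obtain M2 where M2: "\<And>x. \<bar>f2 x\<bar> \<le> M2" using CS1_bound[OF f2C] by blast
  have M20: "M2 \<ge> 0" using M2[of 0] by simp
  define \<epsilon> where "\<epsilon> = e / (2 * \<sigma>)"
  have \<epsilon>: "\<epsilon> > 0" unfolding \<epsilon>_def using e \<sigma>pos by simp
  obtain \<delta> where \<delta>: "\<delta> > 0" and dd: "\<And>a b. \<bar>a - b\<bar> < \<delta> \<Longrightarrow> \<bar>f2 a - f2 b\<bar> < \<epsilon>"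
    using CS1_unif_cont[OF f2C \<epsilon>] by blast
  define q where "q = e * \<delta> / (8 * \<sigma> * (M2 + 1))"
  have q: "q > 0" unfolding q_def using e \<delta> \<sigma>pos M20 by simp
  define d where "d = q\<^sup>2 / (2 * \<sigma>)"
  have dpos: "d > 0" unfolding d_def using q \<sigma>pos by simp
  show ?thesis
  proof (intro exI[of _ d] conjI allI impI)
    show "d > 0" by (rule dpos)
    fix h \<theta> assume h: "0 < h \<and> h < d"
    then have h0: "h > 0" by simp
    define R where "R = (\<lambda>y. f (\<theta> - y) - f \<theta> + y * f1 \<theta> - y\<^sup>2 / 2 * f2 \<theta>)"
    have Rb: "\<bar>R y\<bar> \<le> \<epsilon> / 2 * y\<^sup>2 + M2 / \<delta> * \<bar>y\<bar> ^ 3" for y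
    proof -
      obtain \<tau> where \<tau>: "\<bar>\<tau>\<bar> \<le> \<bar>y\<bar>" and tay: "f (\<theta> - y) = f \<theta> - y * f1 \<theta> + y\<^sup>2 / 2 * f2 (\<theta> + \<tau>)"
        using taylor2[OF f, of y \<theta>] unfolding f1_def f2_def by blast
      have "R y = y\<^sup>2 / 2 * (f2 (\<theta> + \<tau>) - f2 \<theta>)" unfolding R_def tay by (simp add: algebra_simps)
      then have "\<bar>R y\<bar> = \<bar>y\<^sup>2 / 2\<bar> * \<bar>f2 (\<theta> + \<tau>) - f2 \<theta>\<bar>" by (simp only: abs_mult)
      then have Ry: "\<bar>R y\<bar> = y\<^sup>2 / 2 * \<bar>f2 (\<theta> + \<tau>) - f2 \<theta>\<bar>" by simp
      show ?thesis
      proof (cases "\<bar>\<tau>\<bar> < \<delta>")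
        case True
        then have "\<bar>f2 (\<theta> + \<tau>) - f2 \<theta>\<bar> \<le> \<epsilon>" using dd[of "\<theta> + \<tau>" \<theta>] by simp
        then have "\<bar>R y\<bar> \<le> y\<^sup>2 / 2 * \<epsilon>" unfolding Ry by (intro mult_left_mono) auto
        moreover have "0 \<le> M2 / \<delta> * \<bar>y\<bar> ^ 3" using M20 \<delta> by simp
        ultimately show ?thesis by (simp add: mult.commute)
      next
        case False
        then have yd: "\<bar>y\<bar> \<ge> \<delta>" using \<tau> by simp
        have "\<bar>f2 (\<theta> + \<tau>) - f2 \<theta>\<bar> \<le> 2 * M2" using M2[of "\<theta> + \<tau>"] M2[of \<theta>] by linarith
        also have "\<dots> \<le> 2 * M2 * (\<bar>y\<bar> / \<delta>)"
        proof -
          have "1 \<le> \<bar>y\<bar> / \<delta>" using yd \<delta> by simp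
          then show ?thesis using mult_left_mono[of 1 "\<bar>y\<bar> / \<delta>" "2 * M2"] M20 by simp
        qed
        finally have "\<bar>R y\<bar> \<le> y\<^sup>2 / 2 * (2 * M2 * (\<bar>y\<bar> / \<delta>))" unfolding Ry by (intro mult_left_mono) auto
        also have "\<dots> = M2 / \<delta> * \<bar>y\<bar> ^ 3"
        proof -
          have "y\<^sup>2 = \<bar>y\<bar> * \<bar>y\<bar>" by (simp add: power2_eq_square)
          then show ?thesis using \<delta> by (simp add: power3_eq_cube)
        qed
        finally have a: "\<bar>R y\<bar> \<le> M2 / \<delta> * \<bar>y\<bar> ^ 3" .
        have "0 \<le> \<epsilon> / 2 * y\<^sup>2" using \<epsilon> by simp
        then show ?thesis using a by linarith
      qed
    qed
    have iR: "integrable lborel (\<lambda>y. gk h y * R y)"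
    proof -
      have "(\<lambda>y. gk h y * R y) = (\<lambda>y. gk h y * f (\<theta> - y) - f \<theta> * gk h y + f1 \<theta> * (gk h y * y) - f2 \<theta> / 2 * (gk h y * y\<^sup>2))"
        unfolding R_def by (rule ext) (simp add: algebra_simps)
      moreover have "integrable lborel (\<lambda>y. gk h y * f (\<theta> - y) - f \<theta> * gk h y + f1 \<theta> * (gk h y * y) - f2 \<theta> / 2 * (gk h y * y\<^sup>2))"
        using int_gkf[OF fc B h0, of \<theta>] gk_int[OF h0] gk_m1_int[OF h0] gk_moment2_int[OF h0] by simp
      ultimately show ?thesis by simp
    qed
    have I: "hf h f \<theta> - f \<theta> = (\<integral>y. gk h y * R y \<partial>lborel) + \<sigma> * h * f2 \<theta>"
    proof -
      have "(\<integral>y. gk h y * R y \<partial>lborel) = (\<integral>y. gk h y * f (\<theta> - y) - f \<theta> * gk h y + f1 \<theta> * (gk h y * y) - f2 \<theta> / 2 * (gk h y * y\<^sup>2) \<partial>lborel)"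
        unfolding R_def by (rule Bochner_Integration.integral_cong) (simp_all add: algebra_simps)
      also have "\<dots> = (\<integral>y. gk h y * f (\<theta> - y) \<partial>lborel) - f \<theta> + f1 \<theta> * 0 - f2 \<theta> / 2 * (2 * \<sigma> * h)"
        using int_gkf[OF fc B h0, of \<theta>] gk_int[OF h0] gk_m1_int[OF h0] gk_moment2_int[OF h0]
          gk_int1[OF h0] gk_m1[OF h0] gk_moment2[OF h0] by simp
      finally show ?thesis using h0 by (simp add: hf_def)
    qed
    have "\<bar>\<integral>y. gk h y * R y \<partial>lborel\<bar> \<le> (\<integral>y. \<epsilon> / 2 * (gk h y * y\<^sup>2) + M2 / \<delta> * (gk h y * \<bar>y\<bar> ^ 3) \<partial>lborel)"
    proof (rule integral_abs_bound_integral[OF iR])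
      show "integrable lborel (\<lambda>y. \<epsilon> / 2 * (gk h y * y\<^sup>2) + M2 / \<delta> * (gk h y * \<bar>y\<bar> ^ 3))"
        using gk_moment2_int[OF h0] gk_m3_int[OF h0] by simp
      fix y
      have "\<bar>gk h y * R y\<bar> = gk h y * \<bar>R y\<bar>" using gk_nonneg by (simp add: abs_mult)
      also have "\<dots> \<le> gk h y * (\<epsilon> / 2 * y\<^sup>2 + M2 / \<delta> * \<bar>y\<bar> ^ 3)" using Rb gk_nonneg by (intro mult_left_mono)
      also have "\<dots> = \<epsilon> / 2 * (gk h y * y\<^sup>2) + M2 / \<delta> * (gk h y * \<bar>y\<bar> ^ 3)" by (simp add: algebra_simps)
      finally show "\<bar>gk h y * R y\<bar> \<le> \<epsilon> / 2 * (gk h y * y\<^sup>2) + M2 / \<delta> * (gk h y * \<bar>y\<bar> ^ 3)" .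
    qed
    also have "\<dots> = \<epsilon> / 2 * (2 * \<sigma> * h) + M2 / \<delta> * (\<integral>y. gk h y * \<bar>y\<bar> ^ 3 \<partial>lborel)"
      using gk_moment2_int[OF h0] gk_m3_int[OF h0] gk_moment2[OF h0] by simp
    also have "\<dots> \<le> \<epsilon> / 2 * (2 * \<sigma> * h) + M2 / \<delta> * (2 * (sd h) ^ 3)"
      using gk_m3[OF h0] M20 \<delta> by (intro add_left_mono mult_left_mono) auto
    finally have bnd: "\<bar>\<integral>y. gk h y * R y \<partial>lborel\<bar> \<le> \<epsilon> * \<sigma> * h + M2 / \<delta> * (2 * (sd h) ^ 3)" by simp
    have sdh: "sd h \<le> q"
    proof -
      have "sd h = sqrt (2 * \<sigma> * h)" by (simp add: sd_def)
      also have "\<dots> \<le> sqrt (2 * \<sigma> * d)" using h \<sigma>pos by simp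
      also have "2 * \<sigma> * d = q\<^sup>2" unfolding d_def using \<sigma>pos by simp
      finally show ?thesis using q by simp
    qed
    have "(hf h f \<theta> - f \<theta>) / h - \<sigma> * f2 \<theta> = (\<integral>y. gk h y * R y \<partial>lborel) / h"
      unfolding I using h0 by (simp add: field_simps)
    then have "\<bar>(hf h f \<theta> - f \<theta>) / h - \<sigma> * f2 \<theta>\<bar> = \<bar>\<integral>y. gk h y * R y \<partial>lborel\<bar> / h" using h0 by simp
    also have "\<dots> \<le> (\<epsilon> * \<sigma> * h + M2 / \<delta> * (2 * (sd h) ^ 3)) / h" using bnd h0 by (simp add: divide_right_mono)
    also have "\<dots> = \<epsilon> * \<sigma> + M2 / \<delta> * 4 * \<sigma> * sd h"
    proof -
      have "(sd h) ^ 3 = sd h * (2 * \<sigma> * h)" using sd_sq[OF h0] by (simp add: power3_eq_cube power2_eq_square)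
      then show ?thesis using h0 by (simp add: field_simps)
    qed
    also have "\<epsilon> * \<sigma> = e / 2" unfolding \<epsilon>_def using \<sigma>pos by simp
    also have "M2 / \<delta> * 4 * \<sigma> * sd h \<le> M2 / \<delta> * 4 * \<sigma> * q"
      using sdh M20 \<delta> \<sigma>pos by (intro mult_left_mono) auto
    also have "M2 / \<delta> * 4 * \<sigma> * q \<le> e / 2"
    proof -
      have nz: "8 * \<sigma> * (M2 + 1) \<noteq> 0" using \<sigma>pos M20 by simp
      have qq: "q * (8 * \<sigma> * (M2 + 1)) = e * \<delta>" using nonzero_eq_divide_eq[OF nz] q_def by blast
      have c0: "0 \<le> 4 * \<sigma> * q / \<delta>" using \<sigma>pos q \<delta> by simp
      have "M2 / \<delta> * 4 * \<sigma> * q = M2 * (4 * \<sigma> * q / \<delta>)" by simp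
      also have "\<dots> \<le> (M2 + 1) * (4 * \<sigma> * q / \<delta>)" using c0 by (intro mult_right_mono) auto
      also have "\<dots> = (q * (8 * \<sigma> * (M2 + 1))) / (2 * \<delta>)" using \<delta> by (simp add: field_simps)
      also have "\<dots> = e / 2" unfolding qq using \<delta> by simp
      finally show ?thesis .
    qed
    finally show "\<bar>(hf h f \<theta> - f \<theta>) / h - \<sigma> * deriv (deriv f) \<theta>\<bar> \<le> e" by (simp add: f2_def)
  qed
qed

end


context heatk
begin

definition L1 :: "real \<Rightarrow> real \<Rightarrow> real" where
  "L1 t d = (\<integral>u. \<bar>gk t (u + d) - gk t u\<bar> \<partial>lborel)"

lemma gk_dom:
  assumes t: "t > 0" and d: "\<bar>d\<bar> \<le> 1"
  shows "gk t (u + d) \<le> sqrt 2 * exp (1 / (2 * (sd t)\<^sup>2)) * gk (2 * t) u"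
proof -
  define s where "s = sd t"
  have s: "s > 0" unfolding s_def using sd_pos[OF t] .
  have s2: "sd (2 * t) = sqrt 2 * s" unfolding s_def sd_def by (simp add: real_sqrt_mult[symmetric] algebra_simps)
  have sq: "(u + d)\<^sup>2 \<ge> u\<^sup>2 / 2 - 1"
  proof -
    have "2 * (u + d)\<^sup>2 + 2 * d\<^sup>2 - u\<^sup>2 = (u + 2 * d)\<^sup>2" by (simp add: power2_eq_square algebra_simps)
    moreover have "(u + 2 * d)\<^sup>2 \<ge> 0" by simp
    ultimately have "u\<^sup>2 \<le> 2 * (u + d)\<^sup>2 + 2 * d\<^sup>2" by linarith
    moreover have "d\<^sup>2 \<le> 1" using d by (simp add: abs_square_le_1)
    ultimately show ?thesis by simp
  qed
  have ex: "exp (- (u + d)\<^sup>2 / (2 * s\<^sup>2)) \<le> exp (1 / (2 * s\<^sup>2)) * exp (- u\<^sup>2 / (2 * (sqrt 2 * s)\<^sup>2))"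
  proof -
    have "- (u + d)\<^sup>2 / (2 * s\<^sup>2) \<le> 1 / (2 * s\<^sup>2) + (- u\<^sup>2 / (4 * s\<^sup>2))"
      using sq s by (simp add: field_simps)
    then have "exp (- (u + d)\<^sup>2 / (2 * s\<^sup>2)) \<le> exp (1 / (2 * s\<^sup>2) + (- u\<^sup>2 / (4 * s\<^sup>2)))" by simp
    also have "\<dots> = exp (1 / (2 * s\<^sup>2)) * exp (- u\<^sup>2 / (2 * (sqrt 2 * s)\<^sup>2))"
      by (simp add: exp_add[symmetric] power_mult_distrib)
    finally show ?thesis .
  qed
  have c: "1 / sqrt (2 * pi * s\<^sup>2) = sqrt 2 * (1 / sqrt (2 * pi * (sqrt 2 * s)\<^sup>2))"
    using s by (simp add: power_mult_distrib real_sqrt_mult field_simps)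
  have "gk t (u + d) = 1 / sqrt (2 * pi * s\<^sup>2) * exp (- (u + d)\<^sup>2 / (2 * s\<^sup>2))"
    by (simp add: gk_def s_def normal_density_def)
  also have "\<dots> \<le> 1 / sqrt (2 * pi * s\<^sup>2) * (exp (1 / (2 * s\<^sup>2)) * exp (- u\<^sup>2 / (2 * (sqrt 2 * s)\<^sup>2)))"
    using ex by (intro mult_left_mono) auto
  also have "\<dots> = sqrt 2 * exp (1 / (2 * s\<^sup>2)) * (1 / sqrt (2 * pi * (sqrt 2 * s)\<^sup>2) * exp (- u\<^sup>2 / (2 * (sqrt 2 * s)\<^sup>2)))"
    unfolding c by (simp add: mult_ac)
  also have "\<dots> = sqrt 2 * exp (1 / (2 * (sd t)\<^sup>2)) * gk (2 * t) u"
    by (simp add: gk_def s2 normal_density_def s_def)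
  finally show ?thesis .
qed

lemma L1_small:
  assumes t: "t > 0" and e: "e > 0"
  shows "\<exists>\<delta>>0. \<forall>d. \<bar>d\<bar> < \<delta> \<longrightarrow> L1 t d \<le> e"
proof (rule ccontr)
  assume "\<not> ?thesis"
  then have "\<forall>\<delta>>0. \<exists>d. \<bar>d\<bar> < \<delta> \<and> L1 t d > e" by (auto simp: not_le)
  then have "\<forall>n::nat. \<exists>d. \<bar>d\<bar> < 1 / Suc n \<and> L1 t d > e" by simp
  then obtain X where X: "\<And>n. \<bar>X n\<bar> < 1 / Suc n" and XL: "\<And>n. L1 t (X n) > e" by metis
  have X1: "\<bar>X n\<bar> \<le> 1" for n
  proof -
    have "1 / real (Suc n) \<le> 1" by simp
    then show ?thesis using X[of n] by linarith
  qed
  have X0: "X \<longlonglongrightarrow> 0"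
  proof (rule Lim_null_comparison[OF _ LIMSEQ_inverse_real_of_nat])
    show "\<forall>\<^sub>F n in sequentially. norm (X n) \<le> inverse (real (Suc n))"
      using X by (auto intro!: always_eventually less_imp_le simp: divide_inverse)
  qed
  define A where "A = sqrt 2 * exp (1 / (2 * (sd t)\<^sup>2))"
  define w where "w = (\<lambda>u. A * gk (2 * t) u + gk t u)"
  have t2: "2 * t > 0" using t by simp
  have "(\<lambda>n. \<integral>u. \<bar>gk t (u + X n) - gk t u\<bar> \<partial>lborel) \<longlonglongrightarrow> integral\<^sup>L lborel (\<lambda>u::real. 0::real)"
  proof (rule Bochner_Integration.integral_dominated_convergence[where s="\<lambda>n u. \<bar>gk t (u + X n) - gk t u\<bar>" and f="\<lambda>u::real. 0::real" and w=w and M=lborel])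
    show "(\<lambda>u::real. 0::real) \<in> borel_measurable lborel" by simp
    show "(\<lambda>u. \<bar>gk t (u + X n) - gk t u\<bar>) \<in> borel_measurable lborel" for n by measurable
    show "integrable lborel w" unfolding w_def using gk_int[OF t] gk_int[OF t2] by simp
    show "AE u in lborel. (\<lambda>n. \<bar>gk t (u + X n) - gk t u\<bar>) \<longlonglongrightarrow> 0"
    proof (rule AE_I2)
      fix u
      have "isCont (gk t) u" using gk_cont[OF t] continuous_on_eq_continuous_at by blast
      moreover have "(\<lambda>n. u + X n) \<longlonglongrightarrow> u" using tendsto_add[OF tendsto_const X0] by simp
      ultimately have "(\<lambda>n. gk t (u + X n)) \<longlonglongrightarrow> gk t u" by (rule isCont_tendsto_compose)
      then have "(\<lambda>n. gk t (u + X n) - gk t u) \<longlonglongrightarrow> 0" by (rule LIM_zero)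
      then show "(\<lambda>n. \<bar>gk t (u + X n) - gk t u\<bar>) \<longlonglongrightarrow> 0" by (rule tendsto_rabs_zero)
    qed
    fix n
    show "AE u in lborel. norm (\<bar>gk t (u + X n) - gk t u\<bar>) \<le> w u"
    proof (rule AE_I2)
      fix u
      have "norm (\<bar>gk t (u + X n) - gk t u\<bar>) \<le> gk t (u + X n) + gk t u"
        using gk_nonneg[of t "u + X n"] gk_nonneg[of t u] by (simp add: abs_le_iff)
      also have "\<dots> \<le> w u" unfolding w_def A_def using gk_dom[OF t X1[of n], of u] by simp
      finally show "norm (\<bar>gk t (u + X n) - gk t u\<bar>) \<le> w u" .
    qed
  qed
  then have "(\<lambda>n. L1 t (X n)) \<longlonglongrightarrow> 0" by (simp add: L1_def)
  then have "\<forall>\<^sub>F n in sequentially. L1 t (X n) < e" using e by (auto dest: order_tendstoD)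
  then obtain n where "L1 t (X n) < e" by (auto simp: eventually_sequentially)
  then show False using XL[of n] by simp
qed

lemma L1_int:
  assumes t: "t > 0" shows "integrable lborel (\<lambda>u. \<bar>gk t (u + d) - gk t u\<bar>)"
proof -
  have "integrable lborel (\<lambda>u. gk t (d + 1 * u))"
    using lborel_integrable_real_affine[OF gk_int[OF t], of 1 d] by simp
  then have "integrable lborel (\<lambda>u. gk t (u + d))" by (simp add: add.commute)
  then show ?thesis using gk_int[OF t] by (intro integrable_abs integrable_diff) auto
qed

lemma hf_L1:
  assumes t: "t > 0" and f: "f \<in> CS1" and f1: "\<And>x. \<bar>f x\<bar> \<le> B"
  shows "\<bar>hf t f \<theta> - hf t f \<theta>'\<bar> \<le> B * L1 t (\<theta> - \<theta>')"
proof -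
  have fc: "continuous_on UNIV f" using f by (simp add: CS1_def)
  have sub: "(\<integral>y. gk t y * f (a - y) \<partial>lborel) = (\<integral>p. gk t (a - p) * f p \<partial>lborel)" for a
    using lborel_integral_real_affine[of "-1" "\<lambda>y. gk t y * f (a - y)" a] by simp
  have ia: "integrable lborel (\<lambda>p. gk t (a - p) * f p)" for a
  proof -
    have "integrable lborel (\<lambda>y. gk t y * f (a - y))" by (rule int_gkf[OF fc f1 t])
    then have "integrable lborel (\<lambda>p. gk t (a + (-1) * p) * f (a - (a + (-1) * p)))"
      by (rule lborel_integrable_real_affine) simp
    then show ?thesis by simp
  qed
  have "hf t f \<theta> - hf t f \<theta>' = (\<integral>p. (gk t (\<theta> - p) - gk t (\<theta>' - p)) * f p \<partial>lborel)"
    using t ia[of \<theta>] ia[of \<theta>'] by (simp add: hf_def sub algebra_simps)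
  also have "\<bar>\<dots>\<bar> \<le> (\<integral>p. B * \<bar>gk t (\<theta> - p) - gk t (\<theta>' - p)\<bar> \<partial>lborel)"
  proof (rule integral_abs_bound_integral)
    show "integrable lborel (\<lambda>p. (gk t (\<theta> - p) - gk t (\<theta>' - p)) * f p)"
      using ia[of \<theta>] ia[of \<theta>'] by (simp add: algebra_simps)
    have "integrable lborel (\<lambda>u. \<bar>gk t (u + (\<theta> - \<theta>')) - gk t u\<bar>)" by (rule L1_int[OF t])
    then have "integrable lborel (\<lambda>p. \<bar>gk t ((\<theta>' + (-1) * p) + (\<theta> - \<theta>')) - gk t (\<theta>' + (-1) * p)\<bar>)"
      by (rule lborel_integrable_real_affine) simp
    then show "integrable lborel (\<lambda>p. B * \<bar>gk t (\<theta> - p) - gk t (\<theta>' - p)\<bar>)" by simp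
    fix p
    have "\<bar>(gk t (\<theta> - p) - gk t (\<theta>' - p)) * f p\<bar> = \<bar>gk t (\<theta> - p) - gk t (\<theta>' - p)\<bar> * \<bar>f p\<bar>" by (simp add: abs_mult)
    also have "\<dots> \<le> \<bar>gk t (\<theta> - p) - gk t (\<theta>' - p)\<bar> * B" using f1[of p] by (intro mult_left_mono) auto
    finally show "\<bar>(gk t (\<theta> - p) - gk t (\<theta>' - p)) * f p\<bar> \<le> B * \<bar>gk t (\<theta> - p) - gk t (\<theta>' - p)\<bar>" by (simp add: mult.commute)
  qed
  also have "(\<integral>p. B * \<bar>gk t (\<theta> - p) - gk t (\<theta>' - p)\<bar> \<partial>lborel) = B * (\<integral>p. \<bar>gk t (\<theta> - p) - gk t (\<theta>' - p)\<bar> \<partial>lborel)"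
    by simp
  also have "(\<integral>p. \<bar>gk t (\<theta> - p) - gk t (\<theta>' - p)\<bar> \<partial>lborel) = L1 t (\<theta> - \<theta>')"
    unfolding L1_def using lborel_integral_real_affine[of "-1" "\<lambda>p. \<bar>gk t (\<theta> - p) - gk t (\<theta>' - p)\<bar>" \<theta>'] by (simp add: algebra_simps)
  finally show ?thesis .
qed

lemma hf_equi:
  assumes t: "t > 0" and e: "e > 0"
  shows "\<exists>d>0. \<forall>f \<theta> \<theta>'. f \<in> CS1 \<longrightarrow> (\<forall>x. \<bar>f x\<bar> \<le> 1) \<longrightarrow> \<bar>\<theta> - \<theta>'\<bar> < d \<longrightarrow> \<bar>hf t f \<theta> - hf t f \<theta>'\<bar> \<le> e"
proof -
  obtain \<delta> where d: "\<delta> > 0" and dd: "\<And>d. \<bar>d\<bar> < \<delta> \<Longrightarrow> L1 t d \<le> e" using L1_small[OF t e] by blast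
  show ?thesis
  proof (intro exI[of _ \<delta>] conjI allI impI)
    show "\<delta> > 0" by (rule d)
    fix f \<theta> \<theta>' assume f: "f \<in> CS1" and f1: "\<forall>x. \<bar>f x\<bar> \<le> 1" and th: "\<bar>\<theta> - \<theta>'\<bar> < \<delta>"
    have "\<bar>hf t f \<theta> - hf t f \<theta>'\<bar> \<le> 1 * L1 t (\<theta> - \<theta>')" using hf_L1[OF t f, of 1] f1 by blast
    also have "\<dots> \<le> e" using dd[OF th] by simp
    finally show "\<bar>hf t f \<theta> - hf t f \<theta>'\<bar> \<le> e" .
  qed
qed

end


context heatk
begin

definition HG :: "real \<Rightarrow> cper \<Rightarrow> cper" where
  "HG t x = mk (hf t (cf x))"

lemma cf_HG: "cf (HG t x) = hf t (cf x)"
  unfolding HG_def by (rule cf_mk[OF hf_CS1[OF cf_CS1]])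

lemma cf_bound: "\<bar>cf x \<theta>\<bar> \<le> norm x"
  by (rule cf_le_norm)

lemma cf_add_fun: "cf (x + y) = (\<lambda>s. cf x s + cf y s)" by (rule ext) simp
lemma cf_scale_fun: "cf (c *\<^sub>R x) = (\<lambda>s. c * cf x s)" by (rule ext) simp

lemma HG_add: "HG t (x + y) = HG t x + HG t y"
proof (rule cf_eqI)
  fix \<theta>
  have "hf t (\<lambda>s. 1 * cf x s + 1 * cf y s) \<theta> = 1 * hf t (cf x) \<theta> + 1 * hf t (cf y) \<theta>"
    by (rule hf_lin[OF cf_cont cf_bound cf_cont cf_bound])
  then show "cf (HG t (x + y)) \<theta> = cf (HG t x + HG t y) \<theta>" by (simp add: cf_HG cf_add_fun)
qed

lemma HG_scale: "HG t (c *\<^sub>R x) = c *\<^sub>R HG t x"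
proof (rule cf_eqI)
  fix \<theta>
  have "hf t (\<lambda>s. c * cf x s + 0 * cf x s) \<theta> = c * hf t (cf x) \<theta> + 0 * hf t (cf x) \<theta>"
    by (rule hf_lin[OF cf_cont cf_bound cf_cont cf_bound])
  then show "cf (HG t (c *\<^sub>R x)) \<theta> = cf (c *\<^sub>R HG t x) \<theta>" by (simp add: cf_HG cf_scale_fun)
qed

lemma HG_contr: "norm (HG t x) \<le> norm x"
  by (rule norm_cper_le) (simp add: cf_HG hf_bound[OF cf_cont cf_bound])

lemma HG_lin: "bounded_linear (HG t)"
  by (rule bounded_linear_intro[where K=1]) (auto simp: HG_add HG_scale HG_contr)

lemma HG_0: "HG 0 x = x"
  by (rule cf_eqI) (simp add: cf_HG hf_def)

lemma HG_add_time: "t \<ge> 0 \<Longrightarrow> s \<ge> 0 \<Longrightarrow> HG (t + s) x = HG t (HG s x)"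
  by (rule cf_eqI) (simp add: cf_HG hf_semigroup[OF cf_CS1])

lemma HG_c0: "((\<lambda>t. HG t x) \<longlongrightarrow> x) (at_right 0)"
proof (rule tendstoI)
  fix e :: real assume e: "e > 0"
  obtain d where d: "d > 0" and dd: "\<And>h. 0 < h \<and> h < d \<Longrightarrow> (\<forall>\<theta>. \<bar>hf h (cf x) \<theta> - cf x \<theta>\<bar> \<le> e / 2)"
    using hf_strong_unif[OF cf_CS1, of "e / 2" x] e by auto
  show "\<forall>\<^sub>F t in at_right 0. dist (HG t x) x < e"
    unfolding eventually_at_right_field
  proof (intro exI[of _ d] conjI allI impI)
    show "0 < d" by (rule d)
    fix h :: real assume h: "0 < h" "h < d"
    have "norm (HG h x - x) \<le> e / 2"
      by (rule norm_cper_le) (use dd h in \<open>simp add: cf_HG\<close>)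
    then show "dist (HG h x) x < e" using e by (simp add: dist_norm)
  qed
qed

lemma csg_HG: "csg HG"
  unfolding csg_def using HG_lin HG_contr HG_0 HG_add_time HG_c0 by blast

end


definition antider :: "(real \<Rightarrow> real) \<Rightarrow> real \<Rightarrow> real" where
  "antider g \<theta> = integral {0..\<theta>} g - integral {\<theta>..0} g"

lemma antider_local:
  assumes g: "continuous_on UNIV g" and a: "a \<le> 0" "a \<le> u"
  shows "antider g u = integral {a..u} g - integral {a..0} g"
proof (cases "u \<ge> 0")
  case True
  have "integral {a..0} g + integral {0..u} g = integral {a..u} g"
    by (rule Henstock_Kurzweil_Integration.integral_combine) (use a True g in \<open>auto intro: integrable_continuous_real continuous_on_subset\<close>)
  moreover have "integral {u..0} g = 0"
    using True by (cases "u = 0") (auto simp: integral_empty)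
  ultimately show ?thesis unfolding antider_def by simp
next
  case False
  have "integral {a..u} g + integral {u..0} g = integral {a..0} g"
    by (rule Henstock_Kurzweil_Integration.integral_combine) (use a False g in \<open>auto intro: integrable_continuous_real continuous_on_subset\<close>)
  moreover have "integral {0..u} g = 0" using False by (simp add: integral_empty)
  ultimately show ?thesis unfolding antider_def by simp
qed

lemma antider_deriv:
  assumes g: "continuous_on UNIV g"
  shows "DERIV (antider g) \<theta> :> g \<theta>"
proof -
  define a where "a = min 0 \<theta> - 1"
  define b where "b = max 0 \<theta> + 1"
  have ab: "a < \<theta>" "\<theta> < b" "a \<le> 0" unfolding a_def b_def by auto
  have "((\<lambda>u. integral {a..u} g) has_real_derivative g \<theta>) (at \<theta> within {a..b})"
    by (rule integral_has_real_derivative) (use g ab continuous_on_subset in auto)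
  then have "((\<lambda>u. integral {a..u} g) has_real_derivative g \<theta>) (at \<theta>)"
    using at_within_Icc_at[OF ab(1,2)] by simp
  then have d: "((\<lambda>u. integral {a..u} g - integral {a..0} g) has_real_derivative g \<theta>) (at \<theta>)"
    by (auto intro!: derivative_eq_intros)
  show ?thesis
  proof (rule has_field_derivative_transform_within_open[OF d, of "{a<..}"])
    show "open {a<..}" by simp
    show "\<theta> \<in> {a<..}" using ab by simp
    fix u assume "u \<in> {a<..}"
    then show "integral {a..u} g - integral {a..0} g = antider g u"
      using antider_local[OF g, of a u] ab by simp
  qed
qed

lemma antider_pos: "\<theta> \<ge> 0 \<Longrightarrow> antider g \<theta> = integral {0..\<theta>} g"
  unfolding antider_def by (cases "\<theta> = 0") (auto simp: integral_empty)

lemma per_antider: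
  assumes g: "g \<in> CS1" and m0: "integral {0..2*pi} g = 0"
  shows "antider g \<in> CS1" "\<And>\<theta>. DERIV (antider g) \<theta> :> g \<theta>"
proof -
  have gc: "continuous_on UNIV g" using g by (simp add: CS1_def)
  show d: "\<And>\<theta>. DERIV (antider g) \<theta> :> g \<theta>" by (rule antider_deriv[OF gc])
  have dd: "DERIV (\<lambda>\<theta>. antider g (\<theta> + 2*pi) - antider g \<theta>) x :> 0" for x
  proof -
    have "DERIV (\<lambda>\<theta>. antider g (\<theta> + 2*pi)) x :> g (x + 2*pi)"
      using d[of "x + 2*pi"] by (simp add: DERIV_shift)
    then have "DERIV (\<lambda>\<theta>. antider g (\<theta> + 2*pi) - antider g \<theta>) x :> g (x + 2*pi) - g x"
      using d[of x] by (rule DERIV_diff)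
    then show ?thesis using CS1_per[OF g] by simp
  qed
  have "antider g (\<theta> + 2*pi) - antider g \<theta> = antider g (0 + 2*pi) - antider g 0" for \<theta>
  proof -
    have "\<forall>x. DERIV (\<lambda>\<theta>. antider g (\<theta> + 2*pi) - antider g \<theta>) x :> 0" using dd by blast
    from DERIV_isconst_all[OF this, of \<theta> 0] show ?thesis by simp
  qed
  moreover have "antider g (0 + 2*pi) - antider g 0 = 0"
    using m0 antider_pos[of "2*pi" g] antider_pos[of 0 g] by simp
  ultimately have per: "antider g (\<theta> + 2*pi) = antider g \<theta>" for \<theta> by simp
  have "continuous_on UNIV (antider g)"
    using d by (meson DERIV_isCont continuous_at_imp_continuous_on)
  then show "antider g \<in> CS1" using per by (simp add: CS1_def)
qed

lemma CS1_integrable: "f \<in> CS1 \<Longrightarrow> f integrable_on {a..b}"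
  by (rule integrable_continuous_real) (use continuous_on_subset in \<open>auto simp: CS1_def\<close>)

lemma solve_ode:
  assumes w: "w \<in> CS1" and s: "\<sigma> > 0"
  shows "\<exists>z\<in>C2S1. \<forall>\<theta>. \<sigma> * deriv (deriv z) \<theta> = w \<theta> - integral {0..2*pi} w / (2*pi)"
proof -
  define m where "m = integral {0..2*pi} w / (2*pi)"
  define g1 where "g1 = (\<lambda>\<theta>. (w \<theta> - m) / \<sigma>)"
  have g1: "g1 \<in> CS1" unfolding g1_def using w s by (auto simp: CS1_def intro!: continuous_intros)
  have i: "integral {0..2*pi} (\<lambda>\<theta>. w \<theta> - m) = integral {0..2*pi} w - integral {0..2*pi} (\<lambda>\<theta>. m)"
    by (rule integral_diff[OF CS1_integrable[OF w] integrable_const_ivl])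
  have "g1 = (\<lambda>\<theta>. (1 / \<sigma>) *\<^sub>R (w \<theta> - m))" unfolding g1_def by (auto simp: divide_inverse mult.commute)
  then have "integral {0..2*pi} g1 = (1 / \<sigma>) *\<^sub>R integral {0..2*pi} (\<lambda>\<theta>. w \<theta> - m)"
    by (simp only: integral_cmul)
  also have "\<dots> = 0" unfolding i by (simp add: m_def)
  finally have m1: "integral {0..2*pi} g1 = 0" .
  define F1 where "F1 = antider g1"
  have F1: "F1 \<in> CS1" "\<And>\<theta>. DERIV F1 \<theta> :> g1 \<theta>" unfolding F1_def using per_antider[OF g1 m1] by auto
  define m' where "m' = integral {0..2*pi} F1 / (2*pi)"
  define g2 where "g2 = (\<lambda>\<theta>. F1 \<theta> - m')"
  have g2: "g2 \<in> CS1" unfolding g2_def using F1 by (auto simp: CS1_def intro!: continuous_intros)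
  have "integral {0..2*pi} g2 = integral {0..2*pi} F1 - integral {0..2*pi} (\<lambda>\<theta>. m')"
    unfolding g2_def by (rule integral_diff[OF CS1_integrable[OF F1(1)] integrable_const_ivl])
  also have "\<dots> = 0" unfolding m'_def by simp
  finally have m2: "integral {0..2*pi} g2 = 0" .
  define z where "z = antider g2"
  have z: "z \<in> CS1" "\<And>\<theta>. DERIV z \<theta> :> g2 \<theta>" unfolding z_def using per_antider[OF g2 m2] by auto
  have dz: "deriv z = g2" using z(2) DERIV_imp_deriv by blast
  have dg2: "DERIV g2 \<theta> :> g1 \<theta>" for \<theta> unfolding g2_def using F1(2)[of \<theta>] by (auto intro!: derivative_eq_intros)
  have ddz: "deriv (deriv z) = g1" unfolding dz using dg2 DERIV_imp_deriv by blast
  have "z \<in> C2S1"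
    unfolding C2S1_def
  proof (intro CollectI conjI allI)
    show "z \<in> CS1" by (rule z(1))
    fix \<theta> show "z differentiable at \<theta>" using z(2) real_differentiable_def by blast
  next
    fix \<theta> show "deriv z differentiable at \<theta>" unfolding dz using dg2 real_differentiable_def by blast
  next
    show "continuous_on UNIV (deriv (deriv z))" unfolding ddz using g1 by (simp add: CS1_def)
  qed
  moreover have "\<sigma> * deriv (deriv z) \<theta> = w \<theta> - m" for \<theta> unfolding ddz g1_def using s by simp
  ultimately show ?thesis unfolding m_def by blast
qed


lemma C2S1_CS1: "f \<in> C2S1 \<Longrightarrow> f \<in> CS1"
  by (simp add: C2S1_def)

lemma C2S1_dd_CS1: "f \<in> C2S1 \<Longrightarrow> (\<lambda>\<theta>. c * deriv (deriv f) \<theta>) \<in> CS1"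
  using C2S1_facts(5)[of f] by (auto simp: CS1_def intro!: continuous_intros)

lemma C2S1_add_const:
  assumes z: "z \<in> C2S1" shows "(\<lambda>\<theta>. z \<theta> + c) \<in> C2S1"
proof -
  have dz: "DERIV z \<theta> :> deriv z \<theta>" for \<theta> using C2S1_facts(2)[OF z] .
  have "DERIV (\<lambda>\<theta>. z \<theta> + c) \<theta> :> deriv z \<theta>" for \<theta> using dz[of \<theta>] by (auto intro!: derivative_eq_intros)
  then have d: "deriv (\<lambda>\<theta>. z \<theta> + c) = deriv z" using DERIV_imp_deriv by blast
  have zC: "z \<in> CS1" using z by (simp add: C2S1_def)
  have a: "(\<lambda>\<theta>. z \<theta> + c) \<in> CS1" using zC by (auto simp: CS1_def intro!: continuous_intros)
  have b: "\<forall>\<theta>. (\<lambda>\<theta>. z \<theta> + c) differentiable at \<theta>"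
    using \<open>\<And>\<theta>. DERIV (\<lambda>\<theta>. z \<theta> + c) \<theta> :> deriv z \<theta>\<close> real_differentiable_def by blast
  have c: "\<forall>\<theta>. deriv (\<lambda>\<theta>. z \<theta> + c) differentiable at \<theta>" unfolding d using z by (simp add: C2S1_def)
  have e: "continuous_on UNIV (deriv (deriv (\<lambda>\<theta>. z \<theta> + c)))" unfolding d using z by (simp add: C2S1_def)
  show ?thesis using a b c e by (simp add: C2S1_def)
qed

context heatk
begin

lemma cf_div: "cf (x /\<^sub>R h) \<theta> = cf x \<theta> / h"
  by (simp add: divide_inverse mult.commute)

lemma hf_gen_tendsto:
  assumes f: "f \<in> C2S1"
  shows "((\<lambda>h. (HG h (mk f) - mk f) /\<^sub>R h) \<longlongrightarrow> mk (\<lambda>\<theta>. \<sigma> * deriv (deriv f) \<theta>)) (at_right 0)"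
proof (rule tendstoI)
  fix e :: real assume e: "e > 0"
  obtain d where d: "d > 0" and dd: "\<And>h. 0 < h \<and> h < d \<Longrightarrow> (\<forall>\<theta>. \<bar>(hf h f \<theta> - f \<theta>) / h - \<sigma> * deriv (deriv f) \<theta>\<bar> \<le> e / 2)"
    using hf_gen[OF f, of "e / 2"] e by auto
  have fC: "f \<in> CS1" by (rule C2S1_CS1[OF f])
  show "\<forall>\<^sub>F h in at_right 0. dist ((HG h (mk f) - mk f) /\<^sub>R h) (mk (\<lambda>\<theta>. \<sigma> * deriv (deriv f) \<theta>)) < e"
    unfolding eventually_at_right_field
  proof (intro exI[of _ d] conjI allI impI)
    show "0 < d" by (rule d)
    fix h :: real assume h: "0 < h" "h < d"
    have "norm ((HG h (mk f) - mk f) /\<^sub>R h - mk (\<lambda>\<theta>. \<sigma> * deriv (deriv f) \<theta>)) \<le> e / 2"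
    proof (rule norm_cper_le)
      fix \<theta>
      have "cf ((HG h (mk f) - mk f) /\<^sub>R h - mk (\<lambda>\<theta>. \<sigma> * deriv (deriv f) \<theta>)) \<theta>
          = (hf h f \<theta> - f \<theta>) / h - \<sigma> * deriv (deriv f) \<theta>"
        by (simp only: cf_diff cf_div cf_HG cf_mk[OF fC] cf_mk[OF C2S1_dd_CS1[OF f]])
      then show "\<bar>cf ((HG h (mk f) - mk f) /\<^sub>R h - mk (\<lambda>\<theta>. \<sigma> * deriv (deriv f) \<theta>)) \<theta>\<bar> \<le> e / 2"
        using dd h by simp
    qed
    then show "dist ((HG h (mk f) - mk f) /\<^sub>R h) (mk (\<lambda>\<theta>. \<sigma> * deriv (deriv f) \<theta>)) < e"
      using e by (simp add: dist_norm)
  qed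
qed

lemma HG_diff: "HG t (x - y) = HG t x - HG t y"
  using HG_lin[of t] by (simp add: bounded_linear.linear linear_diff)

definition one :: cper where "one = mk (\<lambda>\<theta>. 1)"

lemma cf_one: "cf one = (\<lambda>\<theta>. 1)"
  unfolding one_def by (rule cf_mk) (simp add: CS1_def)

lemma norm_one: "norm one = 1"
proof (rule antisym)
  show "norm one \<le> 1" by (rule norm_cper_le) (simp add: cf_one)
  show "1 \<le> norm one" using cf_le_norm[of one 0] by (simp add: cf_one)
qed

lemma HG_const: "HG t (c *\<^sub>R one) = c *\<^sub>R one"
  by (rule cf_eqI) (simp add: cf_HG cf_one cf_scale_fun hf_const)

lemma heat_gen_domain:
  assumes lim: "((\<lambda>h. (HG h x - x) /\<^sub>R h) \<longlongrightarrow> W) (at_right 0)"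
  shows "cf x \<in> C2S1"
proof -
  interpret G: csg HG by (rule csg_HG)
  define w where "w = cf W"
  have w: "w \<in> CS1" unfolding w_def by (rule cf_CS1)
  define m where "m = integral {0..2*pi} w / (2*pi)"
  obtain z where z: "z \<in> C2S1" and zz: "\<And>\<theta>. \<sigma> * deriv (deriv z) \<theta> = w \<theta> - m"
    using solve_ode[OF w \<sigma>pos] unfolding m_def by blast
  define Z where "Z = mk z"
  have zC: "z \<in> CS1" by (rule C2S1_CS1[OF z])
  have "mk (\<lambda>\<theta>. \<sigma> * deriv (deriv z) \<theta>) = W - m *\<^sub>R one"
    by (rule cf_eqI) (subst cf_mk[OF C2S1_dd_CS1[OF z]], simp add: zz cf_one w_def)
  then have limZ: "((\<lambda>h. (HG h Z - Z) /\<^sub>R h) \<longlongrightarrow> W - m *\<^sub>R one) (at_right 0)"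
    using hf_gen_tendsto[OF z] unfolding Z_def by simp
  define V where "V = x - Z"
  have "((\<lambda>h. (HG h x - x) /\<^sub>R h - (HG h Z - Z) /\<^sub>R h) \<longlongrightarrow> W - (W - m *\<^sub>R one)) (at_right 0)"
    by (rule tendsto_diff[OF lim limZ])
  moreover have "(HG h x - x) /\<^sub>R h - (HG h Z - Z) /\<^sub>R h = (HG h V - V) /\<^sub>R h" for h
    unfolding V_def by (simp add: HG_diff scaleR_diff_right)
  ultimately have limV: "((\<lambda>h. (HG h V - V) /\<^sub>R h) \<longlongrightarrow> m *\<^sub>R one) (at_right 0)" by simp
  have fixV: "HG t V = V + t *\<^sub>R (m *\<^sub>R one)" if t: "t \<ge> 0" for t
    by (rule G.G_fix[OF limV _ t]) (rule HG_const)
  have m0: "m = 0"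
  proof (rule ccontr)
    assume mnz: "m \<noteq> 0"
    define t where "t = (2 * norm V + 1) / \<bar>m\<bar>"
    have t: "t \<ge> 0" unfolding t_def by simp
    have "norm (HG t V - V) \<le> 2 * norm V"
      using HG_contr[of t V] norm_triangle_ineq4[of "HG t V" V] by linarith
    moreover have "norm (HG t V - V) = t * \<bar>m\<bar>" using fixV[OF t] t by (simp add: norm_one abs_mult)
    moreover have "t * \<bar>m\<bar> = 2 * norm V + 1" unfolding t_def using mnz by simp
    ultimately show False by linarith
  qed
  have "HG 1 V = V" using fixV[of 1] m0 by simp
  then have "hf 1 (cf V) \<theta> = cf V \<theta>" for \<theta> using cf_HG[of 1 V] by simp
  then obtain c where c: "\<And>\<theta>. cf V \<theta> = c" using hf_max_principle[OF cf_CS1, of 1 V] by auto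
  have "cf x = (\<lambda>\<theta>. z \<theta> + c)"
  proof
    fix \<theta>
    have "cf x \<theta> = cf V \<theta> + cf Z \<theta>" unfolding V_def by simp
    then show "cf x \<theta> = z \<theta> + c" using c cf_mk[OF zC] unfolding Z_def by simp
  qed
  then show ?thesis using C2S1_add_const[OF z] by simp
qed

end


lemma red_per: "red (\<theta> + 2*pi) = red \<theta>"
proof -
  have "(\<theta> + 2*pi) / (2*pi) = \<theta> / (2*pi) + 1" by (simp add: field_simps)
  then have "\<lfloor>(\<theta> + 2*pi) / (2*pi)\<rfloor> = \<lfloor>\<theta> / (2*pi)\<rfloor> + 1" by simp
  then show ?thesis unfolding red_def by (simp add: algebra_simps)
qed

locale comb = heatk \<sigma> + csgP "heatk.HG \<sigma>" P K for \<sigma> P K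
begin

lemma compact_U:
  assumes t: "t > 0"
  shows "compact_op_CS1 (\<lambda>f. cf (u (mk f) t))"
  unfolding compact_op_CS1_def
proof (intro allI impI)
  fix us :: "nat \<Rightarrow> real \<Rightarrow> real"
  assume us: "\<forall>n. us n \<in> CS1 \<and> supn (us n) \<le> 1"
  define X where "X = (\<lambda>n. mk (us n))"
  have nX: "norm (X n) \<le> 1" for n
  proof -
    have a: "supn (us n) \<le> 1" "us n \<in> CS1" using us by auto
    have "supn (cf (mk (us n))) = norm (mk (us n))" by (rule supn_cf)
    then have "supn (us n) = norm (mk (us n))" using cf_mk[OF a(2)] by simp
    then show ?thesis using a(1) unfolding X_def by simp
  qed
  define F where "F = (\<lambda>n. cf (u (X n) t))"
  define M where "M = exp (K * t)"
  have M: "M > 0" unfolding M_def by simp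
  have nU: "norm (u (X n) s) \<le> M" if "0 \<le> s" "s \<le> t" for n s
  proof -
    have "norm (u (X n) s) \<le> norm (X n) * exp (K * s)" by (rule u_bound) (use that in simp)
    also have "\<dots> \<le> 1 * exp (K * t)" using nX[of n] that Kpos by (intro mult_mono) auto
    finally show ?thesis by (simp add: M_def)
  qed
  have Fb: "norm (F n x) \<le> M" for n x
    unfolding F_def using cf_le_norm[of "u (X n) t" x] nU[of t n] t by simp
  have equi: "\<exists>d>0. \<forall>n y. y \<in> {0..2*pi} \<and> norm (x - y) < d \<longrightarrow> norm (F n x - F n y) < e"
    if e: "e > 0" for x e
  proof -
    define \<epsilon> where "\<epsilon> = min t (e / (4 * (K * M + 1)))"
    have \<epsilon>: "\<epsilon> > 0" "\<epsilon> \<le> t" unfolding \<epsilon>_def using t e Kpos M by (auto simp: add_pos_nonneg)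
    have KM: "\<epsilon> * K * M \<le> e / 4"
    proof -
      have "\<epsilon> * (K * M) \<le> e / (4 * (K * M + 1)) * (K * M)"
        unfolding \<epsilon>_def using Kpos M by (intro mult_right_mono) auto
      also have "\<dots> \<le> e / 4"
      proof -
        have "e / (4 * (K * M + 1)) * (K * M) = e / 4 * (K * M / (K * M + 1))" by (simp add: field_simps)
        also have "\<dots> \<le> e / 4 * 1"
        proof (rule mult_left_mono)
          have "0 < K * M" using Kpos M by simp
          then show "K * M / (K * M + 1) \<le> 1" by (simp add: divide_le_eq)
        qed (use e in simp)
        finally show ?thesis by simp
      qed
      finally show ?thesis by (simp add: mult.assoc)
    qed
    obtain d where d: "d > 0" and dd: "\<And>s. \<bar>s\<bar> < d \<Longrightarrow> L1 \<epsilon> s \<le> e / (4 * (M + 1))"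
      using L1_small[OF \<epsilon>(1), of "e / (4 * (M + 1))"] e M by auto
    show ?thesis
    proof (intro exI[of _ d] conjI allI impI)
      show "d > 0" by (rule d)
      fix n y assume ny: "y \<in> {0..2*pi} \<and> norm (x - y) < d"
      define V where "V = u (X n) (t - \<epsilon>)"
      define R where "R = u (X n) t - HG \<epsilon> V"
      have nR: "norm R \<le> e / 4"
      proof -
        have "norm R \<le> \<epsilon> * K * exp (K * t) * norm (X n)"
          unfolding R_def V_def by (rule u_decomp) (use \<epsilon> in auto)
        also have "\<dots> \<le> \<epsilon> * K * M * 1" unfolding M_def using nX[of n] \<epsilon> Kpos by (intro mult_left_mono) auto
        finally show ?thesis using KM by simp
      qed
      have nV: "\<bar>cf V z\<bar> \<le> M" for z
        using cf_le_norm[of V z] nU[of "t - \<epsilon>" n] \<epsilon> unfolding V_def by simp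
      have hb: "\<bar>hf \<epsilon> (cf V) x - hf \<epsilon> (cf V) y\<bar> \<le> M * L1 \<epsilon> (x - y)"
        by (rule hf_L1[OF \<epsilon>(1) cf_CS1 nV])
      also have "\<dots> \<le> M * (e / (4 * (M + 1)))" using dd[of "x - y"] ny M by (intro mult_left_mono) auto
      also have "\<dots> \<le> e / 4"
      proof -
        have "M * (e / (4 * (M + 1))) = e / 4 * (M / (M + 1))" by (simp add: field_simps)
        also have "\<dots> \<le> e / 4 * 1" using e M by (intro mult_left_mono) auto
        finally show ?thesis by simp
      qed
      finally have h1: "\<bar>hf \<epsilon> (cf V) x - hf \<epsilon> (cf V) y\<bar> \<le> e / 4" .
      have Fz: "F n z = hf \<epsilon> (cf V) z + cf R z" for z
        unfolding F_def R_def by (simp add: cf_HG)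
      have "norm (F n x - F n y) \<le> \<bar>hf \<epsilon> (cf V) x - hf \<epsilon> (cf V) y\<bar> + \<bar>cf R x\<bar> + \<bar>cf R y\<bar>"
        unfolding Fz by simp
      also have "\<dots> \<le> e / 4 + e / 4 + e / 4"
        using h1 cf_le_norm[of R x] cf_le_norm[of R y] nR by linarith
      also have "\<dots> < e" using e by simp
      finally show "norm (F n x - F n y) < e" .
    qed
  qed
  obtain g k where gc: "continuous_on {0..2*pi} g" and k: "strict_mono (k :: nat \<Rightarrow> nat)"
    and conv: "\<And>e. 0 < e \<Longrightarrow> \<exists>N. \<forall>n x. n \<ge> N \<and> x \<in> {0..2*pi} \<longrightarrow> norm (F (k n) x - g x) < e"
    using Arzela_Ascoli[of "{0..2*pi}" F M] Fb equi by blast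
  have FC: "F n \<in> CS1" for n unfolding F_def by (rule cf_CS1)
  define y where "y = (\<lambda>\<theta>. g (red \<theta>))"
  have conv': "\<exists>N. \<forall>n \<theta>. n \<ge> N \<longrightarrow> \<bar>F (k n) \<theta> - y \<theta>\<bar> < e" if e: "e > 0" for e
  proof -
    obtain N where N: "\<And>n x. n \<ge> N \<Longrightarrow> x \<in> {0..2*pi} \<Longrightarrow> norm (F (k n) x - g x) < e"
      using conv[OF e] by blast
    show ?thesis
    proof (intro exI[of _ N] allI impI)
      fix n \<theta> assume n: "n \<ge> N"
      have "F (k n) \<theta> = F (k n) (red \<theta>)" using CS1_red[OF FC] by simp
      moreover have "red \<theta> \<in> {0..2*pi}" using red_range[of \<theta>] by auto
      ultimately show "\<bar>F (k n) \<theta> - y \<theta>\<bar> < e" using N[OF n] unfolding y_def by simp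
    qed
  qed
  have ul: "uniform_limit UNIV (\<lambda>n. F (k n)) y sequentially"
    unfolding uniform_limit_sequentially_iff dist_real_def using conv' by blast
  have yc: "continuous_on UNIV y"
  proof (rule uniform_limit_theorem[OF _ ul])
    show "\<forall>\<^sub>F n in sequentially. continuous_on UNIV (F (k n))"
      using FC by (simp add: CS1_def)
  qed simp
  have yC: "y \<in> CS1" using yc by (simp add: CS1_def y_def red_per)
  have lim: "(\<lambda>n. supn (\<lambda>\<theta>. cf (u (mk (us (k n))) t) \<theta> - y \<theta>)) \<longlonglongrightarrow> 0"
  proof (rule LIMSEQ_I)
    fix e :: real assume e: "e > 0"
    obtain N where N: "\<And>n \<theta>. n \<ge> N \<Longrightarrow> \<bar>F (k n) \<theta> - y \<theta>\<bar> < e / 2"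
      using conv'[of "e / 2"] e by auto
    show "\<exists>N. \<forall>n\<ge>N. norm (supn (\<lambda>\<theta>. cf (u (mk (us (k n))) t) \<theta> - y \<theta>) - 0) < e"
    proof (intro exI[of _ N] allI impI)
      fix n assume n: "n \<ge> N"
      have dC: "(\<lambda>\<theta>. F (k n) \<theta> - y \<theta>) \<in> CS1"
        using FC[of "k n"] yC by (auto simp: CS1_def intro!: continuous_intros)
      have "supn (\<lambda>\<theta>. F (k n) \<theta> - y \<theta>) \<le> e / 2"
        by (rule supn_le[OF dC]) (use N[OF n] in \<open>simp add: less_imp_le\<close>)
      moreover have "supn (\<lambda>\<theta>. F (k n) \<theta> - y \<theta>) \<ge> 0" by (rule supn_nonneg[OF dC])
      ultimately show "norm (supn (\<lambda>\<theta>. cf (u (mk (us (k n))) t) \<theta> - y \<theta>) - 0) < e"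
        using e unfolding F_def X_def by simp
    qed
  qed
  show "\<exists>r y. strict_mono r \<and> y \<in> CS1 \<and> (\<lambda>n. supn (\<lambda>\<theta>. cf (u (mk (us (r n))) t) \<theta> - y \<theta>)) \<longlonglongrightarrow> 0"
    using k yC lim by blast
qed

end


context comb
begin

lemma tendsto_norm_iff: "((\<lambda>t. norm (f t - l)) \<longlongrightarrow> 0) F \<longleftrightarrow> (f \<longlongrightarrow> l) F"
  by (simp add: tendsto_norm_zero_iff LIM_zero_iff)

lemma gen_equiv:
  assumes x: "x \<in> CS1" and y: "y \<in> CS1"
  shows "((\<lambda>t. supn (\<lambda>\<theta>. (cf (u (mk x) t) \<theta> - x \<theta>) / t - y \<theta>)) \<longlongrightarrow> 0) (at_right 0)
     \<longleftrightarrow> ((\<lambda>t. (u (mk x) t - mk x) /\<^sub>R t) \<longlongrightarrow> mk y) (at_right 0)"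
proof -
  have "(\<lambda>\<theta>. (cf (u (mk x) t) \<theta> - x \<theta>) / t - y \<theta>) = cf ((u (mk x) t - mk x) /\<^sub>R t - mk y)" for t
    by (rule ext) (simp add: cf_mk[OF x] cf_mk[OF y] divide_inverse mult.commute)
  then have "supn (\<lambda>\<theta>. (cf (u (mk x) t) \<theta> - x \<theta>) / t - y \<theta>) = norm ((u (mk x) t - mk x) /\<^sub>R t - mk y)" for t
    by (simp add: supn_cf)
  then show ?thesis using tendsto_norm_iff by simp
qed

lemma decomp_gen: "(u X t - X) /\<^sub>R t = (HG t X - X) /\<^sub>R t + (u X t - HG t X) /\<^sub>R t"
  by (simp add: algebra_simps scaleR_diff_right)

lemma gen_forward:
  assumes f: "f \<in> C2S1"
  shows "((\<lambda>t. (u (mk f) t - mk f) /\<^sub>R t) \<longlongrightarrow> mk (\<lambda>\<theta>. \<sigma> * deriv (deriv f) \<theta>) + P (mk f)) (at_right 0)"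
  unfolding decomp_gen by (rule tendsto_add[OF hf_gen_tendsto[OF f] u_gen_diff])

lemma gen_backward:
  assumes "((\<lambda>t. (u X t - X) /\<^sub>R t) \<longlongrightarrow> Y) (at_right 0)"
  shows "cf X \<in> C2S1"
proof (rule heat_gen_domain)
  have "((\<lambda>t. (u X t - X) /\<^sub>R t - (u X t - HG t X) /\<^sub>R t) \<longlongrightarrow> Y - P X) (at_right 0)"
    by (rule tendsto_diff[OF assms u_gen_diff])
  moreover have "(u X t - X) /\<^sub>R t - (u X t - HG t X) /\<^sub>R t = (HG t X - X) /\<^sub>R t" for t
    by (simp add: algebra_simps scaleR_diff_right)
  ultimately show "((\<lambda>h. (HG h X - X) /\<^sub>R h) \<longlongrightarrow> Y - P X) (at_right 0)" by simp
qed

end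

definition Pg :: "(real \<Rightarrow> real) \<Rightarrow> (real \<Rightarrow> real) \<Rightarrow> (real \<Rightarrow> real) \<Rightarrow> (real \<Rightarrow> real) \<Rightarrow> real \<Rightarrow> real" where
  "Pg A k b x = (\<lambda>\<theta>. A \<theta> * x \<theta> - k \<theta> * integral {0..2*pi} (\<lambda>\<xi>. x \<xi> * b \<xi>))"

lemma Pg_CS1:
  assumes A: "A \<in> CS1" and k: "k \<in> CS1" and x: "x \<in> CS1"
  shows "Pg A k b x \<in> CS1"
  using A k x unfolding Pg_def CS1_def by (auto intro!: continuous_intros)

definition PC :: "(real \<Rightarrow> real) \<Rightarrow> (real \<Rightarrow> real) \<Rightarrow> (real \<Rightarrow> real) \<Rightarrow> cper \<Rightarrow> cper" where
  "PC A k b x = mk (Pg A k b (cf x))"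

lemma cf_PC: "A \<in> CS1 \<Longrightarrow> k \<in> CS1 \<Longrightarrow> cf (PC A k b x) = Pg A k b (cf x)"
  unfolding PC_def by (rule cf_mk[OF Pg_CS1[OF _ _ cf_CS1]])

lemma int_lin:
  assumes b: "b \<in> CS1"
  shows "integral {0..2*pi} (\<lambda>\<xi>. (a * cf x \<xi> + c * cf y \<xi>) * b \<xi>)
       = a * integral {0..2*pi} (\<lambda>\<xi>. cf x \<xi> * b \<xi>) + c * integral {0..2*pi} (\<lambda>\<xi>. cf y \<xi> * b \<xi>)"
proof -
  have ix: "(\<lambda>\<xi>. cf x \<xi> * b \<xi>) integrable_on {0..2*pi}"
    by (rule CS1_integrable) (use b cf_CS1[of x] in \<open>auto simp: CS1_def intro!: continuous_intros\<close>)
  have iy: "(\<lambda>\<xi>. cf y \<xi> * b \<xi>) integrable_on {0..2*pi}"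
    by (rule CS1_integrable) (use b cf_CS1[of y] in \<open>auto simp: CS1_def intro!: continuous_intros\<close>)
  have "(\<lambda>\<xi>. (a * cf x \<xi> + c * cf y \<xi>) * b \<xi>) = (\<lambda>\<xi>. a *\<^sub>R (cf x \<xi> * b \<xi>) + c *\<^sub>R (cf y \<xi> * b \<xi>))"
    by (auto simp: algebra_simps)
  then show ?thesis
    using integral_add[OF integrable_cmul[OF ix, of a] integrable_cmul[OF iy, of c]] by simp
qed

lemma PC_lin:
  assumes A: "A \<in> CS1" and k: "k \<in> CS1" and b: "b \<in> CS1"
  shows "PC A k b (a *\<^sub>R x + c *\<^sub>R y) = a *\<^sub>R PC A k b x + c *\<^sub>R PC A k b y"
proof (rule cf_eqI)
  fix \<theta>
  have e: "cf (a *\<^sub>R x + c *\<^sub>R y) = (\<lambda>\<xi>. a * cf x \<xi> + c * cf y \<xi>)" by (rule ext) simp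
  have "Pg A k b (\<lambda>\<xi>. a * cf x \<xi> + c * cf y \<xi>) \<theta> = A \<theta> * (a * cf x \<theta> + c * cf y \<theta>)
     - k \<theta> * (a * integral {0..2*pi} (\<lambda>\<xi>. cf x \<xi> * b \<xi>) + c * integral {0..2*pi} (\<lambda>\<xi>. cf y \<xi> * b \<xi>))"
    by (simp only: Pg_def int_lin[OF b])
  then show "cf (PC A k b (a *\<^sub>R x + c *\<^sub>R y)) \<theta> = cf (a *\<^sub>R PC A k b x + c *\<^sub>R PC A k b y) \<theta>"
    by (simp add: cf_PC[OF A k] e) (simp add: Pg_def algebra_simps)
qed

lemma PC_bound:
  assumes A: "A \<in> CS1" and k: "k \<in> CS1" and b: "b \<in> CS1"
    and MA: "\<And>\<theta>. \<bar>A \<theta>\<bar> \<le> MA" and Mk: "\<And>\<theta>. \<bar>k \<theta>\<bar> \<le> Mk" and Mb: "\<And>\<theta>. \<bar>b \<theta>\<bar> \<le> Mb"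
  shows "norm (PC A k b x) \<le> (MA + Mk * (Mb * (2*pi))) * norm x"
proof (rule norm_cper_le)
  fix \<theta>
  have Mb0: "Mb \<ge> 0" using Mb[of 0] by simp
  have Mk0: "Mk \<ge> 0" using Mk[of 0] by simp
  have I: "\<bar>integral {0..2*pi} (\<lambda>\<xi>. cf x \<xi> * b \<xi>)\<bar> \<le> (norm x * Mb) * (2*pi - 0)"
  proof -
    have "norm (integral {0..2*pi} (\<lambda>\<xi>. cf x \<xi> * b \<xi>)) \<le> (norm x * Mb) * (2*pi - 0)"
    proof (rule integral_bound)
      show "continuous_on {0..2*pi} (\<lambda>\<xi>. cf x \<xi> * b \<xi>)"
        using b cf_CS1[of x] continuous_on_subset by (auto simp: CS1_def intro!: continuous_intros)
      fix \<xi> show "norm (cf x \<xi> * b \<xi>) \<le> norm x * Mb"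
        using cf_le_norm[of x \<xi>] Mb[of \<xi>] by (simp add: abs_mult mult_mono)
    qed simp
    then show ?thesis by simp
  qed
  have "\<bar>cf (PC A k b x) \<theta>\<bar> \<le> \<bar>A \<theta>\<bar> * \<bar>cf x \<theta>\<bar> + \<bar>k \<theta>\<bar> * \<bar>integral {0..2*pi} (\<lambda>\<xi>. cf x \<xi> * b \<xi>)\<bar>"
    by (simp add: cf_PC[OF A k] Pg_def abs_mult[symmetric] abs_triangle_ineq4)
  also have "\<dots> \<le> MA * norm x + Mk * ((norm x * Mb) * (2*pi - 0))"
    using MA[of \<theta>] cf_le_norm[of x \<theta>] Mk[of \<theta>] I by (intro add_mono mult_mono) auto
  also have "\<dots> = (MA + Mk * (Mb * (2*pi))) * norm x" by (simp add: algebra_simps)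
  finally show "\<bar>cf (PC A k b x) \<theta>\<bar> \<le> (MA + Mk * (Mb * (2*pi))) * norm x" .
qed


theorem lemma5p9:
  fixes \<sigma> q \<gamma> \<rho> lam0 :: real and A \<eta> b0 :: "real \<Rightarrow> real"
  assumes "\<sigma> > 0"
    and "A \<in> CS1" and "\<forall>\<theta>. A \<theta> > 0"
    and "\<eta> \<in> CS1" and "\<forall>\<theta>. \<eta> \<theta> > 0"
    and "q \<ge> 0" and "\<gamma> > 0" and "\<gamma> \<noteq> 1"
    and "\<rho> > 0" and "\<rho> > lam0 * (1 - \<gamma>)"
    and "eigenpair \<sigma> A lam0 b0"
    and "\<forall>lam b. eigenpair \<sigma> A lam b \<longrightarrow> lam \<le> lam0"
    and "\<forall>\<theta>. b0 \<theta> > 0"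
    and "integral {0..2*pi} (\<lambda>\<theta>. (b0 \<theta>)\<^sup>2) = 1"
  shows "\<exists>T. C0_semigroup_CS1 T
           \<and> generator_CS1 T C2S1 (Bop \<sigma> A (alpha_const \<gamma> \<rho> lam0 q \<eta> b0) q \<gamma> \<eta> b0)
           \<and> (\<forall>t>0. compact_op_CS1 (T t))"
proof -
  note \<sigma>pos = assms(1) and AC = assms(2) and \<eta>C = assms(4) and \<eta>pos = assms(5) and b0pos = assms(13)
  define \<alpha> where "\<alpha> = alpha_const \<gamma> \<rho> lam0 q \<eta> b0"
  have \<alpha>0: "\<alpha> \<ge> 0" unfolding \<alpha>_def alpha_const_def by simp
  have b0C: "b0 \<in> CS1" using assms(11) by (simp add: eigenpair_def C2S1_def)
  define k where "k = (\<lambda>\<theta>. (\<alpha> * b0 \<theta>) powr (-1 / \<gamma>) * \<eta> \<theta> powr ((q + \<gamma> - 1) / \<gamma>))"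
  have kC: "k \<in> CS1"
  proof -
    have per: "k (\<theta> + 2*pi) = k \<theta>" for \<theta>
      unfolding k_def using CS1_per[OF b0C] CS1_per[OF \<eta>C] by simp
    have "continuous_on UNIV k"
    proof (cases "\<alpha> = 0")
      case True
      then have "k = (\<lambda>\<theta>. 0)" unfolding k_def by (rule_tac ext) simp
      then show ?thesis by simp
    next
      case False
      then have ap: "\<alpha> > 0" using \<alpha>0 by simp
      have c1: "continuous_on UNIV b0" "continuous_on UNIV \<eta>" using b0C \<eta>C by (auto simp: CS1_def)
      have nz: "b0 \<theta> \<noteq> 0" "\<eta> \<theta> \<noteq> 0" for \<theta> using b0pos \<eta>pos by (metis less_irrefl)+
      show ?thesis unfolding k_def
        using ap c1 nz by (auto intro!: continuous_intros)
    qed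
    then show ?thesis using per by (simp add: CS1_def)
  qed
  obtain MA where MA: "\<And>\<theta>. \<bar>A \<theta>\<bar> \<le> MA" using supn_ge[OF AC] by blast
  obtain Mk where Mk: "\<And>\<theta>. \<bar>k \<theta>\<bar> \<le> Mk" using supn_ge[OF kC] by blast
  obtain Mb where Mb: "\<And>\<theta>. \<bar>b0 \<theta>\<bar> \<le> Mb" using supn_ge[OF b0C] by blast
  have MA0: "MA \<ge> 0" and Mk0: "Mk \<ge> 0" and Mb0: "Mb \<ge> 0" using MA[of 0] Mk[of 0] Mb[of 0] by auto
  define K where "K = MA + Mk * (Mb * (2*pi)) + 1"
  have Kpos: "K > 0" unfolding K_def using MA0 Mk0 Mb0 by (simp add: add_nonneg_pos)
  define P where "P = PC A k b0"
  have PK: "norm (P x) \<le> K * norm x" for x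
  proof -
    have "norm (P x) \<le> (MA + Mk * (Mb * (2*pi))) * norm x"
      unfolding P_def by (rule PC_bound[OF AC kC b0C MA Mk Mb])
    also have "\<dots> \<le> K * norm x" unfolding K_def by (intro mult_right_mono) auto
    finally show ?thesis .
  qed
  have Plin: "bounded_linear P"
  proof (rule bounded_linear_intro[where K=K])
    fix x y show "P (x + y) = P x + P y" using PC_lin[OF AC kC b0C, of 1 x 1 y] by (simp add: P_def)
  next
    fix r x show "P (r *\<^sub>R x) = r *\<^sub>R P x" using PC_lin[OF AC kC b0C, of r x 0 x] by (simp add: P_def)
  next
    fix x show "norm (P x) \<le> norm x * K" using PK[of x] by (simp add: mult.commute)
  qed
  interpret H: heatk \<sigma> by unfold_locales (rule \<sigma>pos)
  interpret comb \<sigma> P K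
  proof (intro comb.intro csgP.intro csgP_axioms.intro)
    show "heatk \<sigma>" by unfold_locales (rule \<sigma>pos)
    show "csg (heatk.HG \<sigma>)" by (rule H.csg_HG)
  qed (use Plin Kpos PK in auto)
  define T where "T = (\<lambda>t f. cf (u (mk f) t))"
  have Bop_eq: "Bop \<sigma> A \<alpha> q \<gamma> \<eta> b0 f = (\<lambda>\<theta>. \<sigma> * deriv (deriv f) \<theta> + Pg A k b0 f \<theta>)" for f
    unfolding Bop_def Pg_def k_def by (rule ext) (simp add: algebra_simps)
  have Bop_C: "Bop \<sigma> A \<alpha> q \<gamma> \<eta> b0 f \<in> CS1" if f: "f \<in> C2S1" for f
  proof -
    have "(\<lambda>\<theta>. \<sigma> * deriv (deriv f) \<theta>) \<in> CS1" by (rule C2S1_dd_CS1[OF f])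
    moreover have "Pg A k b0 f \<in> CS1" by (rule Pg_CS1[OF AC kC C2S1_CS1[OF f]])
    ultimately show ?thesis unfolding Bop_eq by (auto simp: CS1_def intro!: continuous_intros)
  qed
  have Bop_mk: "mk (Bop \<sigma> A \<alpha> q \<gamma> \<eta> b0 f) = mk (\<lambda>\<theta>. \<sigma> * deriv (deriv f) \<theta>) + P (mk f)" if f: "f \<in> C2S1" for f
  proof (rule cf_eqI)
    fix \<theta>
    have fC: "f \<in> CS1" by (rule C2S1_CS1[OF f])
    show "cf (mk (Bop \<sigma> A \<alpha> q \<gamma> \<eta> b0 f)) \<theta> = cf (mk (\<lambda>\<theta>. \<sigma> * deriv (deriv f) \<theta>) + P (mk f)) \<theta>"
      unfolding cf_add cf_mk[OF Bop_C[OF f]] cf_mk[OF C2S1_dd_CS1[OF f]] P_def cf_PC[OF AC kC] cf_mk[OF fC]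
      by (simp add: Bop_eq)
  qed
  have C0: "C0_semigroup_CS1 T"
    unfolding C0_semigroup_CS1_def
  proof (intro conjI allI impI ballI)
    fix t :: real assume t: "t \<ge> 0"
    show "bounded_linear_CS1 (T t)"
      unfolding bounded_linear_CS1_def
    proof (intro conjI ballI allI)
      fix x assume "x \<in> CS1" show "T t x \<in> CS1" unfolding T_def by (rule cf_CS1)
    next
      fix x y a b assume x: "x \<in> CS1" and y: "y \<in> CS1"
      have m: "mk (\<lambda>\<theta>. a * x \<theta> + b * y \<theta>) = a *\<^sub>R mk x + b *\<^sub>R mk y"
      proof (rule cf_eqI)
        fix \<theta>
        have "(\<lambda>\<theta>. a * x \<theta> + b * y \<theta>) \<in> CS1" using x y by (auto simp: CS1_def intro!: continuous_intros)
        then show "cf (mk (\<lambda>\<theta>. a * x \<theta> + b * y \<theta>)) \<theta> = cf (a *\<^sub>R mk x + b *\<^sub>R mk y) \<theta>"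
          by (simp add: cf_mk x y)
      qed
      show "T t (\<lambda>\<theta>. a * x \<theta> + b * y \<theta>) = (\<lambda>\<theta>. a * T t x \<theta> + b * T t y \<theta>)"
        unfolding T_def m u_lin[OF t] by (rule ext) simp
    next
      show "\<exists>M. \<forall>x\<in>CS1. supn (T t x) \<le> M * supn x"
      proof (intro exI[of _ "exp (K * t)"] ballI)
        fix x assume x: "x \<in> CS1"
        have "supn (T t x) = norm (u (mk x) t)" unfolding T_def by (rule supn_cf)
        also have "\<dots> \<le> norm (mk x) * exp (K * t)" by (rule u_bound[OF t])
        also have "norm (mk x) = supn x" using supn_cf[of "mk x"] cf_mk[OF x] by simp
        finally show "supn (T t x) \<le> exp (K * t) * supn x" by (simp add: mult.commute)
      qed
    qed
  next
    fix x assume x: "x \<in> CS1"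
    show "T 0 x = x" unfolding T_def u_0 by (rule cf_mk[OF x])
  next
    fix t s :: real and x assume t: "t \<ge> 0" and s: "s \<ge> 0" and x: "x \<in> CS1"
    show "T (t + s) x = T t (T s x)" unfolding T_def mk_cf u_semigroup[OF t s] ..
  next
    fix x assume x: "x \<in> CS1"
    have "(\<lambda>\<theta>. T t x \<theta> - x \<theta>) = cf (u (mk x) t - mk x)" for t
      unfolding T_def by (rule ext) (simp add: cf_mk[OF x])
    then have e: "supn (\<lambda>\<theta>. T t x \<theta> - x \<theta>) = norm (u (mk x) t - mk x)" for t by (simp add: supn_cf)
    show "((\<lambda>t. supn (\<lambda>\<theta>. T t x \<theta> - x \<theta>)) \<longlongrightarrow> 0) (at_right 0)"
      unfolding e tendsto_norm_iff by (rule u_cont0)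
  qed
  have gen: "generator_CS1 T C2S1 (Bop \<sigma> A \<alpha> q \<gamma> \<eta> b0)"
    unfolding generator_CS1_def
  proof (intro conjI ballI)
    fix x assume x: "x \<in> CS1"
    show "x \<in> C2S1 \<longleftrightarrow> (\<exists>y\<in>CS1. ((\<lambda>t. supn (\<lambda>\<theta>. (T t x \<theta> - x \<theta>) / t - y \<theta>)) \<longlongrightarrow> 0) (at_right 0))"
    proof
      assume xC: "x \<in> C2S1"
      show "\<exists>y\<in>CS1. ((\<lambda>t. supn (\<lambda>\<theta>. (T t x \<theta> - x \<theta>) / t - y \<theta>)) \<longlongrightarrow> 0) (at_right 0)"
      proof (intro bexI[of _ "Bop \<sigma> A \<alpha> q \<gamma> \<eta> b0 x"])
        show "Bop \<sigma> A \<alpha> q \<gamma> \<eta> b0 x \<in> CS1" by (rule Bop_C[OF xC])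
        show "((\<lambda>t. supn (\<lambda>\<theta>. (T t x \<theta> - x \<theta>) / t - Bop \<sigma> A \<alpha> q \<gamma> \<eta> b0 x \<theta>)) \<longlongrightarrow> 0) (at_right 0)"
          unfolding T_def gen_equiv[OF x Bop_C[OF xC]] Bop_mk[OF xC] by (rule gen_forward[OF xC])
      qed
    next
      assume "\<exists>y\<in>CS1. ((\<lambda>t. supn (\<lambda>\<theta>. (T t x \<theta> - x \<theta>) / t - y \<theta>)) \<longlongrightarrow> 0) (at_right 0)"
      then obtain y where y: "y \<in> CS1" and l: "((\<lambda>t. supn (\<lambda>\<theta>. (T t x \<theta> - x \<theta>) / t - y \<theta>)) \<longlongrightarrow> 0) (at_right 0)"
        by blast
      have "((\<lambda>t. (u (mk x) t - mk x) /\<^sub>R t) \<longlongrightarrow> mk y) (at_right 0)"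
        using l unfolding T_def gen_equiv[OF x y] .
      then have "cf (mk x) \<in> C2S1" by (rule gen_backward)
      then show "x \<in> C2S1" using cf_mk[OF x] by simp
    qed
  next
    show "C2S1 \<subseteq> CS1" by (auto simp: C2S1_def)
  next
    fix x assume xC: "x \<in> C2S1"
    have x: "x \<in> CS1" by (rule C2S1_CS1[OF xC])
    show "Bop \<sigma> A \<alpha> q \<gamma> \<eta> b0 x \<in> CS1" by (rule Bop_C[OF xC])
    show "((\<lambda>t. supn (\<lambda>\<theta>. (T t x \<theta> - x \<theta>) / t - Bop \<sigma> A \<alpha> q \<gamma> \<eta> b0 x \<theta>)) \<longlongrightarrow> 0) (at_right 0)"
      unfolding T_def gen_equiv[OF x Bop_C[OF xC]] Bop_mk[OF xC] by (rule gen_forward[OF xC])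
  qed
  have cpt: "\<forall>t>0. compact_op_CS1 (T t)"
    unfolding T_def using compact_U by blast
  show ?thesis using C0 gen cpt unfolding \<alpha>_def by blast
qed


end
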